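(* $F:Y\to Y$ is topologically exact: for every nonempty open subset $U\subset Y$ there exists $n\ge0$ such that $F^nU\supset Y$.
   Context: Let $\mathbb{T}=\mathbb{R}/\mathbb{Z}$, $M=[0,1]\times\mathbb{T}$. Fix $\gamma>0$. Let $u:[0,\tfrac34]\times\mathbb{T}\to(0,\infty)$ be $C^2$ with $u(0,\theta)=c_0>0$. Define $f(x,\theta)=(f_1(x,\theta),4\theta\bmod1)$, $f_1(x,\theta)=x(1+x^\gamma u(x,\theta))$ for $0\le x\le\tfrac34$, $f_1=4x-3$ for $\tfrac34<x\le1$. Standing assumptions: $x(1+x^\gamma u)\le1$ on $[0,\tfrac34]\times\mathbb{T}$; $|(Df)_{(x,\theta)}v|\ge|v|$ on $[0,\tfrac34]\times\mathbb{T}$; $f_1(\tfrac34,\theta)>\tfrac{15}{16}$; $\sup|x\,\partial u/\partial x|$, $\sup|\partial u/\partial\theta|$ sufficiently small. Let $X_i=\{(x,\theta):0\le x\le f_1(\tfrac34,\tfrac{i+\theta}{4})\}$, $i=0,\dots,3$, $X=\bigcup_iX_i$, $Y=([\tfrac34,1]\times\mathbb{T})\cap X$, $\varphi$ the first return time of $f$ to $Y$, and $F=f^\varphi:Y\to Y$ the first return map. *)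

theory Defs
  imports "HOL-Analysis.Analysis"
begin

text \<open>The circle T = R/Z is realised as the unit circle in the complex plane,
  via t \<mapsto> cis (2 pi t).  A point (x, theta) of M = [0,1] x T is a pair
  (x, z) :: real \<times> complex with z on the unit circle.  The function u is given
  through its 1-periodic lift u :: real \<times> real \<Rightarrow> real.\<close>

definition circ :: "real \<Rightarrow> complex" where
  "circ t = cis (2 * pi * t)"

definition angle01 :: "complex \<Rightarrow> real" where
  "angle01 z = frac (Arg z / (2 * pi))"

definition Tcirc :: "complex set" where
  "Tcirc = sphere 0 1"

definition Sdom :: "(real \<times> real) set" where
  "Sdom = {0..3/4} \<times> UNIV"

definition f1 :: "real \<Rightarrow> (real \<times> real \<Rightarrow> real) \<Rightarrow> real \<Rightarrow> real \<Rightarrow> real" where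
  "f1 \<gamma> u x t = (if x \<le> 3/4 then x * (1 + x powr \<gamma> * u (x, t)) else 4 * x - 3)"

definition fleft_lift :: "real \<Rightarrow> (real \<times> real \<Rightarrow> real) \<Rightarrow> real \<times> real \<Rightarrow> real \<times> real" where
  "fleft_lift \<gamma> u p = (fst p * (1 + fst p powr \<gamma> * u p), 4 * snd p)"

text \<open>The map f on M; theta \<mapsto> 4 theta mod 1 corresponds to z \<mapsto> z^4.\<close>
definition fmap :: "real \<Rightarrow> (real \<times> real \<Rightarrow> real) \<Rightarrow> real \<times> complex \<Rightarrow> real \<times> complex" where
  "fmap \<gamma> u p = (f1 \<gamma> u (fst p) (angle01 (snd p)), (snd p) ^ 4)"

definition Xi :: "real \<Rightarrow> (real \<times> real \<Rightarrow> real) \<Rightarrow> nat \<Rightarrow> (real \<times> complex) set" where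
  "Xi \<gamma> u i = {(x, z). z \<in> Tcirc \<and> 0 \<le> x \<and> x \<le> f1 \<gamma> u (3/4) ((real i + angle01 z) / 4)}"

definition Xset :: "real \<Rightarrow> (real \<times> real \<Rightarrow> real) \<Rightarrow> (real \<times> complex) set" where
  "Xset \<gamma> u = (\<Union>i\<in>{0..3}. Xi \<gamma> u i)"

definition Yset :: "real \<Rightarrow> (real \<times> real \<Rightarrow> real) \<Rightarrow> (real \<times> complex) set" where
  "Yset \<gamma> u = ({3/4..1} \<times> Tcirc) \<inter> Xset \<gamma> u"

definition return_dom :: "real \<Rightarrow> (real \<times> real \<Rightarrow> real) \<Rightarrow> (real \<times> complex) set" where
  "return_dom \<gamma> u = {p \<in> Yset \<gamma> u. \<exists>n\<ge>1. (fmap \<gamma> u ^^ n) p \<in> Yset \<gamma> u}"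

definition return_time :: "real \<Rightarrow> (real \<times> real \<Rightarrow> real) \<Rightarrow> real \<times> complex \<Rightarrow> nat" where
  "return_time \<gamma> u p = (LEAST n. n \<ge> 1 \<and> (fmap \<gamma> u ^^ n) p \<in> Yset \<gamma> u)"

definition Fret :: "real \<Rightarrow> (real \<times> real \<Rightarrow> real) \<Rightarrow> real \<times> complex \<Rightarrow> real \<times> complex" where
  "Fret \<gamma> u p = (fmap \<gamma> u ^^ return_time \<gamma> u p) p"

primrec Fpow_img :: "real \<Rightarrow> (real \<times> real \<Rightarrow> real) \<Rightarrow> nat \<Rightarrow> (real \<times> complex) set \<Rightarrow> (real \<times> complex) set" where
  "Fpow_img \<gamma> u 0 U = U"
| "Fpow_img \<gamma> u (Suc n) U = Fret \<gamma> u ` (Fpow_img \<gamma> u n U \<inter> return_dom \<gamma> u)"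

definition topologically_exact_F :: "real \<Rightarrow> (real \<times> real \<Rightarrow> real) \<Rightarrow> bool" where
  "topologically_exact_F \<gamma> u \<longleftrightarrow>
     (\<forall>U. openin (top_of_set (Yset \<gamma> u)) U \<and> U \<noteq> {} \<longrightarrow> (\<exists>n. Yset \<gamma> u \<subseteq> Fpow_img \<gamma> u n U))"

definition C2_on :: "(real \<times> real) set \<Rightarrow> (real \<times> real \<Rightarrow> real) \<Rightarrow> bool" where
  "C2_on S g \<longleftrightarrow> (\<exists>(g' :: real \<times> real \<Rightarrow> (real \<times> real) \<Rightarrow>\<^sub>L real)
                      (g'' :: real \<times> real \<Rightarrow> (real \<times> real) \<Rightarrow>\<^sub>L ((real \<times> real) \<Rightarrow>\<^sub>L real)).
      (\<forall>p\<in>S. (g has_derivative blinfun_apply (g' p)) (at p within S)) \<and>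
      (\<forall>p\<in>S. (g' has_derivative blinfun_apply (g'' p)) (at p within S)) \<and>
      continuous_on S g'')"

end

theory Submission
  imports Defs
begin

lemma circ_add_int: "circ (s + of_int k) = circ s"
proof -
  have "circ (s + of_int k) = cis (2 *  pi * s) * cis (2 *  pi * of_int k)"
    by (simp add: circ_def cis_mult algebra_simps)
  also have "cis (2 *  pi * of_int k) = 1" by (rule cis_multiple_2pi) simp
  finally show ?thesis by (simp add: circ_def)
qed

lemma circ_pow4: "circ s ^ 4 = circ (4 * s)"
proof -
  have "circ s ^ 4 = cis (real 4 * (2 * pi * s))" unfolding circ_def by (rule Complex.DeMoivre)
  thus ?thesis by (simp add: circ_def algebra_simps)
qed

lemma norm_circ[simp]: "norm (circ s) = 1"
  by (simp add: circ_def)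

lemma circ_in_T[simp]: "circ s \<in> Tcirc"
  by (simp add: Tcirc_def)

lemma Arg_cis_int: "\<exists>k::int. Arg (cis a) = a - 2 *  pi * of_int k"
proof -
  have "cis (Arg (cis a)) = cis a" by (simp add: cis_Arg)
  hence "cis (a - Arg (cis a)) = 1" by (simp add: cis_divide[symmetric])
  hence "cos (a - Arg (cis a)) = 1"
    by (metis cis.sel(1) one_complex.sel(1))
  then obtain n::int where "a - Arg (cis a) = of_int n * 2 * pi"
    using cos_one_2pi_int by blast
  thus ?thesis by (intro exI[of _ n]) (simp add: algebra_simps)
qed

lemma angle01_circ: "angle01 (circ s) = frac s"
proof -
  obtain k::int where k: "Arg (cis (2 *  pi * s)) = 2 *  pi * s - 2 *  pi * of_int k"
    using Arg_cis_int by blast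
  have "Arg (cis (2 *  pi * s)) / (2 *  pi) = s + of_int (-k)"
    using k by (simp add: field_simps)
  hence "angle01 (circ s) = frac (s + of_int (-k))" by (simp add: angle01_def circ_def)
  thus ?thesis by (simp only: frac_add_of_int_right)
qed

lemma circ_angle01: assumes "norm z = 1" shows "circ (angle01 z) = z"
proof -
  have z0: "z \<noteq> 0" using assms by auto
  have "circ (angle01 z) = circ (Arg z / (2 *  pi) + of_int (- \<lfloor>Arg z / (2 *  pi)\<rfloor>))"
    by (simp add: angle01_def frac_def)
  also have "\<dots> = circ (Arg z / (2 *  pi))" by (rule circ_add_int)
  also have "\<dots> = cis (Arg z)" by (simp add: circ_def)
  also have "\<dots> = sgn z" using z0 by (simp add: cis_Arg)
  also have "\<dots> = z" using assms by (simp add: sgn_eq)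
  finally show ?thesis .
qed

lemma Sdom_iff[simp]: "(x, t) \<in> Sdom \<longleftrightarrow> 0 \<le> x \<and> x \<le> 3/4"
  by (simp add: Sdom_def)

locale setting =
  fixes \<gamma> :: real and u :: "real \<times> real \<Rightarrow> real"
    and u' :: "real \<times> real \<Rightarrow> (real \<times> real) \<Rightarrow>\<^sub>L real"
  assumes gpos: "\<gamma> > 0"
    and uder: "\<And>p. p \<in> Sdom \<Longrightarrow> (u has_derivative blinfun_apply (u' p)) (at p within Sdom)"
    and upos: "\<And>p. p \<in> Sdom \<Longrightarrow> u p > 0"
    and uper: "\<And>x t. 0 \<le> x \<Longrightarrow> x \<le> 3/4 \<Longrightarrow> u (x, t + 1) = u (x, t)"
    and ule1: "\<And>x t. 0 \<le> x \<Longrightarrow> x \<le> 3/4 \<Longrightarrow> x * (1 + x powr \<gamma> * u (x, t)) \<le> 1"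
    and expand: "\<And>p D v. p \<in> Sdom \<Longrightarrow> (fleft_lift \<gamma> u has_derivative D) (at p within Sdom)
                   \<Longrightarrow> norm (D v) \<ge> norm v"
    and hbig: "\<And>t. f1 \<gamma> u (3/4) t > 15/16"
begin

definition L :: "real \<Rightarrow> real \<Rightarrow> real" where
  "L x t = x * (1 + x powr \<gamma> * u (x, t))"

definition h :: "real \<Rightarrow> real" where
  "h t = L (3/4) t"

definition G :: "real \<Rightarrow> real" where
  "G s = max (max (h (s/4)) (h ((1+s)/4))) (max (h ((2+s)/4)) (h ((3+s)/4)))"

definition F1 :: "real \<Rightarrow> real \<Rightarrow> real" where
  "F1 x t = (if x \<le> 3/4 then L x t else 4 * x - 3)"

abbreviation P :: "real \<Rightarrow> real \<Rightarrow> real \<times> complex" where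
  "P x s \<equiv> (x, circ s)"

abbreviation fm where "fm \<equiv> fmap \<gamma> u"
abbreviation Y where "Y \<equiv> Yset \<gamma> u"

lemma u_per_nat: "0 \<le> x \<Longrightarrow> x \<le> 3/4 \<Longrightarrow> u (x, t + real n) = u (x, t)"
proof (induction n)
  case 0 then show ?case by simp
next
  case (Suc n)
  have "u (x, t + real (Suc n)) = u (x, (t + real n) + 1)" by (simp add: algebra_simps)
  also have "\<dots> = u (x, t + real n)" using Suc.prems by (rule uper)
  finally show ?case using Suc by simp
qed

lemma u_per_int: assumes "0 \<le> x" "x \<le> 3/4" shows "u (x, t + of_int k) = u (x, t)"
proof (cases "k \<ge> 0")
  case True
  then obtain n where "k = int n" by (metis nonneg_eq_int)
  then show ?thesis using u_per_nat[OF assms] by simp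
next
  case False
  then obtain n where n: "k = - int n" by (metis nonpos_int_cases linorder_not_le less_imp_le)
  have "u (x, t) = u (x, (t - real n) + real n)" by simp
  also have "\<dots> = u (x, t - real n)" using u_per_nat[OF assms] by blast
  finally show ?thesis using n by simp
qed

lemma u_frac: assumes "0 \<le> x" "x \<le> 3/4" shows "u (x, frac t) = u (x, t)"
proof -
  have "frac t = t + of_int (- \<lfloor>t\<rfloor>)" by (simp add: frac_def)
  then show ?thesis using u_per_int[OF assms, of t "- \<lfloor>t\<rfloor>"] by simp
qed

lemma L_int: "0 \<le> x \<Longrightarrow> x \<le> 3/4 \<Longrightarrow> L x (t + of_int k) = L x t"
  by (simp add: L_def u_per_int)

lemma L_frac: "0 \<le> x \<Longrightarrow> x \<le> 3/4 \<Longrightarrow> L x (frac t) = L x t"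
  by (simp add: L_def u_frac)

lemma h_int: "h (t + of_int k) = h t"
  by (simp add: h_def L_int)

lemma h_1: "h (t + 1) = h t"
  using h_int[of t 1] by simp

lemma f1_34: "f1 \<gamma> u (3/4) t = h t"
  by (simp add: f1_def h_def L_def)

lemma h_gt: "h t > 15/16"
  using hbig[of t] by (simp add: f1_34)

lemma L_le1: "0 \<le> x \<Longrightarrow> x \<le> 3/4 \<Longrightarrow> L x t \<le> 1"
  using ule1 by (simp add: L_def)

lemma h_le1: "h t \<le> 1"
  by (simp add: h_def L_le1)

lemma G_1: "G (s + 1) = G s"
proof -
  have "h ((3 + (s+1))/4) = h (s/4)"
    using h_1[of "s/4"] by (simp add: add_divide_distrib algebra_simps)
  moreover have "(1 + (s+1))/4 = (2+s)/4" "(2 + (s+1))/4 = (3+s)/4" "(s+1)/4 = (1+s)/4"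
    by (simp_all add: algebra_simps)
  ultimately show ?thesis unfolding G_def by (simp only:)
qed

lemma G_nat: "G (s + real n) = G s"
proof (induction n)
  case (Suc n)
  have "G (s + real (Suc n)) = G ((s + real n) + 1)" by (simp add: algebra_simps)
  then show ?case using G_1 Suc by simp
qed simp

lemma G_frac: "G (frac s) = G s"
proof (cases "\<lfloor>s\<rfloor> \<ge> 0")
  case True
  then obtain n where n: "\<lfloor>s\<rfloor> = int n" by (metis nonneg_eq_int)
  have "G s = G (frac s + real n)" by (simp add: frac_def n)
  then show ?thesis using G_nat by simp
next
  case False
  then obtain n where n: "\<lfloor>s\<rfloor> = - int n" by (metis nonpos_int_cases linorder_not_le less_imp_le)
  have "G (frac s) = G (s + real n)" by (simp add: frac_def n)
  then show ?thesis using G_nat by simp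
qed

lemma h_le_G: "h t \<le> G (4 * t)"
  by (simp add: G_def)

lemma G_gt: "G s > 15/16"
  using h_gt[of "s/4"] by (simp add: G_def less_max_iff_disj)

lemma G_le1: "G s \<le> 1"
  using h_le1 by (simp add: G_def)

lemma G_cases: "\<exists>i::nat. i \<le> 3 \<and> G s = h ((real i + s)/4)"
proof -
  have "G s = h ((real 0 + s)/4) \<or> G s = h ((real 1 + s)/4) \<or> G s = h ((real 2 + s)/4) \<or> G s = h ((real 3 + s)/4)"
    unfolding G_def by (simp add: max_def)
  then show ?thesis
  proof (elim disjE)
    assume "G s = h ((real 0 + s)/4)" then show ?thesis by (intro exI[of _ 0]) simp
  next
    assume "G s = h ((real 1 + s)/4)" then show ?thesis by (intro exI[of _ 1]) simp
  next
    assume "G s = h ((real 2 + s)/4)" then show ?thesis by (intro exI[of _ 2]) simp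
  next
    assume "G s = h ((real 3 + s)/4)" then show ?thesis by (intro exI[of _ 3]) simp
  qed
qed

lemma F1_f1: "0 \<le> x \<Longrightarrow> f1 \<gamma> u x (frac s) = F1 x s"
  by (simp add: f1_def F1_def L_def u_frac)

lemma fm_P: "0 \<le> x \<Longrightarrow> fm (P x s) = P (F1 x s) (4 * s)"
  by (simp add: fmap_def angle01_circ F1_f1 circ_pow4)

lemma Y_P: "P x s \<in> Y \<longleftrightarrow> 3/4 \<le> x \<and> x \<le> G s"
proof -
  have X: "P x s \<in> Xset \<gamma> u \<longleftrightarrow> 0 \<le> x \<and> (x \<le> h (frac s / 4) \<or> x \<le> h ((1 + frac s)/4)
      \<or> x \<le> h ((2 + frac s)/4) \<or> x \<le> h ((3 + frac s)/4))"
  proof -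
    have e: "{0..3::nat} = {0,1,2,3}" by auto
    have "P x s \<in> Xset \<gamma> u \<longleftrightarrow> (\<exists>i\<in>{0,1,2,3::nat}. 0 \<le> x \<and> x \<le> h ((real i + frac s)/4))"
      by (simp only: Xset_def Xi_def e angle01_circ f1_34 UN_iff mem_Collect_eq case_prod_conv circ_in_T simp_thms)
    also have "\<dots> \<longleftrightarrow> 0 \<le> x \<and> (x \<le> h (frac s / 4) \<or> x \<le> h ((1 + frac s)/4)
      \<or> x \<le> h ((2 + frac s)/4) \<or> x \<le> h ((3 + frac s)/4))"
      by auto
    finally show ?thesis .
  qed
  have "x \<le> G s \<longleftrightarrow> (x \<le> h (frac s / 4) \<or> x \<le> h ((1 + frac s)/4)
      \<or> x \<le> h ((2 + frac s)/4) \<or> x \<le> h ((3 + frac s)/4))"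
  proof -
    have "x \<le> G s \<longleftrightarrow> x \<le> G (frac s)" by (simp only: G_frac)
    then show ?thesis by (simp add: G_def le_max_iff_disj)
  qed
  then show ?thesis using X G_le1[of s] by (auto simp: Yset_def)
qed

end

context setting begin

lemma u_cont: "continuous_on Sdom u"
  using uder has_derivative_continuous continuous_on_eq_continuous_within by blast

lemma at_Sdom: "0 < x \<Longrightarrow> x < 3/4 \<Longrightarrow> at (x, t) within Sdom = at (x, t)"
  by (rule at_within_interior) (simp add: Sdom_def interior_Times)

lemma u_isCont: "0 < x \<Longrightarrow> x < 3/4 \<Longrightarrow> isCont u (x, t)"
  using u_cont at_Sdom continuous_on_eq_continuous_within
  by (metis Sdom_iff less_eq_real_def)

lemma L_cont: "continuous_on {0..3/4} (\<lambda>x. L x t)"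
proof -
  have "continuous_on {0..3/4} (\<lambda>x. u (x, t))"
    by (rule continuous_on_compose2[OF u_cont]) (auto intro!: continuous_intros)
  moreover have "continuous_on {0..3/4::real} (\<lambda>x. x powr \<gamma>)"
    using gpos by (intro continuous_on_powr') (auto intro!: continuous_intros)
  ultimately show ?thesis unfolding L_def
    by (intro continuous_on_mult[OF continuous_on_id] continuous_on_add[OF continuous_on_const] continuous_on_mult)
qed

lemma h_cont: "continuous_on UNIV h"
proof -
  have "continuous_on UNIV (\<lambda>t. u (3/4, t))"
    by (rule continuous_on_compose2[OF u_cont]) (auto intro!: continuous_intros)
  then show ?thesis unfolding h_def L_def
    by (intro continuous_on_mult[OF continuous_on_const] continuous_on_add[OF continuous_on_const] continuous_on_mult[OF continuous_on_const])
qed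

lemma h_isCont: "isCont h t"
  using h_cont by (simp add: continuous_on_eq_continuous_at)

lemma G_isCont: "isCont G s"
proof -
  have c: "isCont (\<lambda>s. h (f s)) s" if "isCont f s" for f
    using that h_isCont by (rule isCont_o2)
  show ?thesis unfolding G_def[abs_def]
    by (intro continuous_max c continuous_divide continuous_add continuous_const continuous_ident) auto
qed

lemma L_isCont_comp:
  assumes "isCont a s0" "0 < a s0" "a s0 < 3/4"
  shows "isCont (\<lambda>s. L (a s) (c * s)) s0"
proof -
  have "isCont (\<lambda>s. (a s, c * s)) s0"
    using assms(1) by (intro continuous_Pair continuous_mult[OF continuous_const continuous_ident])
  moreover have "isCont u (a s0, c * s0)"
    by (rule u_isCont) (use assms in auto)
  ultimately have "isCont (\<lambda>s. u (a s, c * s)) s0"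
    by (rule isCont_o2)
  moreover have "isCont (\<lambda>s. a s powr \<gamma>) s0"
    by (rule continuous_powr[OF assms(1) continuous_const]) (use assms in simp)
  ultimately show ?thesis unfolding L_def using assms(1)
    by (intro continuous_mult continuous_add continuous_const)
qed

definition DFL :: "real \<times> real \<Rightarrow> real \<times> real \<Rightarrow> real \<times> real" where
  "DFL p v = (fst v * (1 + fst p powr \<gamma> * u p) + fst p * (fst p powr \<gamma> * (fst v * \<gamma> / fst p) * u p + fst p powr \<gamma> * blinfun_apply (u' p) v), 4 * snd v)"

lemma DFL_deriv:
  assumes "p \<in> Sdom" "fst p > 0"
  shows "(fleft_lift \<gamma> u has_derivative DFL p) (at p within Sdom)"
proof -
  have A: "((\<lambda>q. fst q) has_derivative (\<lambda>v. fst v)) (at p within Sdom)"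
    by (rule has_derivative_fst[OF has_derivative_ident])
  have B: "((\<lambda>q. fst q powr \<gamma>) has_derivative (\<lambda>v. fst p powr \<gamma> * (0 * ln (fst p) + fst v * \<gamma> / fst p))) (at p within Sdom)"
    by (rule has_derivative_powr[OF A has_derivative_const assms(2) assms(1)])
  have C: "(u has_derivative blinfun_apply (u' p)) (at p within Sdom)" using uder assms(1) by blast
  have BC: "((\<lambda>q. fst q powr \<gamma> * u q) has_derivative
      (\<lambda>v. fst p powr \<gamma> * blinfun_apply (u' p) v + fst p powr \<gamma> * (0 * ln (fst p) + fst v * \<gamma> / fst p) * u p)) (at p within Sdom)"
    by (rule has_derivative_mult[OF B C])
  have BC1: "((\<lambda>q. 1 + fst q powr \<gamma> * u q) has_derivative
      (\<lambda>v. 0 + (fst p powr \<gamma> * blinfun_apply (u' p) v + fst p powr \<gamma> * (0 * ln (fst p) + fst v * \<gamma> / fst p) * u p))) (at p within Sdom)"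
    by (rule has_derivative_add[OF has_derivative_const BC])
  have ABC: "((\<lambda>q. fst q * (1 + fst q powr \<gamma> * u q)) has_derivative
      (\<lambda>v. fst p * (0 + (fst p powr \<gamma> * blinfun_apply (u' p) v + fst p powr \<gamma> * (0 * ln (fst p) + fst v * \<gamma> / fst p) * u p))
        + fst v * (1 + fst p powr \<gamma> * u p))) (at p within Sdom)"
    by (rule has_derivative_mult[OF A BC1])
  have D: "((\<lambda>q. 4 * snd q) has_derivative (\<lambda>v. 4 * snd v + 0 * snd p)) (at p within Sdom)"
    by (rule has_derivative_mult[OF has_derivative_const has_derivative_snd[OF has_derivative_ident]])
  have E: "((\<lambda>q. (fst q * (1 + fst q powr \<gamma> * u q), 4 * snd q)) has_derivative
      (\<lambda>v. (fst p * (0 + (fst p powr \<gamma> * blinfun_apply (u' p) v + fst p powr \<gamma> * (0 * ln (fst p) + fst v * \<gamma> / fst p) * u p))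
        + fst v * (1 + fst p powr \<gamma> * u p), 4 * snd v + 0 * snd p))) (at p within Sdom)"
    by (rule has_derivative_Pair[OF ABC D])
  show ?thesis unfolding fleft_lift_def DFL_def
    by (rule has_derivative_eq_rhs[OF E]) (simp add: fun_eq_iff algebra_simps)
qed

end

context setting begin

lemma DFL_norm: "p \<in> Sdom \<Longrightarrow> fst p > 0 \<Longrightarrow> norm (DFL p v) \<ge> norm v"
  using expand DFL_deriv by blast

lemma DFL_fst: assumes "0 < x" "x \<le> 3/4" shows "\<bar>fst (DFL (x, t) (k, 0))\<bar> \<ge> \<bar>k\<bar>"
proof -
  have "norm (DFL (x, t) (k, 0)) \<ge> norm (k, 0::real)"
    by (rule DFL_norm) (use assms in auto)
  moreover have "DFL (x, t) (k, 0) = (fst (DFL (x, t) (k, 0)), 0)" by (simp add: DFL_def)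
  moreover have "norm (a::real, 0::real) = \<bar>a\<bar>" for a by (simp add: norm_Pair)
  ultimately show ?thesis by (metis (no_types))
qed

lemma L_deriv:
  assumes "0 < x" "x < 3/4"
  shows "((\<lambda>y. L y t) has_derivative (\<lambda>k. fst (DFL (x, t) (k, 0)))) (at x)"
proof -
  have fl: "(fleft_lift \<gamma> u has_derivative DFL (x, t)) (at (x, t))"
    using DFL_deriv[of "(x, t)"] at_Sdom[OF assms] assms by simp
  have pr: "((\<lambda>y. (y, t)) has_derivative (\<lambda>k. (k, 0))) (at x)"
    by (rule has_derivative_Pair[OF has_derivative_ident has_derivative_const])
  have "((\<lambda>y. fst (fleft_lift \<gamma> u (y, t))) has_derivative (\<lambda>k. fst (DFL (x, t) (k, 0)))) (at x)"
    by (rule has_derivative_fst[OF has_derivative_compose[OF pr fl]])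
  moreover have "(\<lambda>y. fst (fleft_lift \<gamma> u (y, t))) = (\<lambda>y. L y t)"
    by (simp add: fleft_lift_def L_def fun_eq_iff)
  ultimately show ?thesis by simp
qed

lemma L0[simp]: "L 0 t = 0"
  by (simp add: L_def)

lemma L_gt: assumes "0 < x" "x \<le> 3/4" shows "L x t > x"
proof -
  have "x powr \<gamma> * u (x, t) > 0" using assms upos[of "(x, t)"] by simp
  then show ?thesis using assms unfolding L_def by (simp add: algebra_simps)
qed

lemma L_inj: assumes "0 \<le> a" "a < b" "b \<le> 3/4" shows "L a t \<noteq> L b t"
proof
  assume eq: "L a t = L b t"
  have cont: "continuous_on {a..b} (\<lambda>x. L x t)"
    by (rule continuous_on_subset[OF L_cont]) (use assms in auto)
  have der: "\<And>z. a < z \<Longrightarrow> z < b \<Longrightarrow> ((\<lambda>y. L y t) has_derivative (\<lambda>k. fst (DFL (z, t) (k, 0)))) (at z)"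
    by (rule L_deriv) (use assms in auto)
  obtain z where z: "a < z" "z < b" "(\<lambda>k. fst (DFL (z, t) (k, 0))) = (\<lambda>v. 0)"
    using Rolle_deriv[OF assms(2) eq cont der] by blast
  have "fst (DFL (z, t) (1, 0)) = 0" using fun_cong[OF z(3), of 1] by simp
  moreover have "\<bar>fst (DFL (z, t) (1, 0))\<bar> \<ge> \<bar>1\<bar>"
    by (rule DFL_fst) (use z assms in auto)
  ultimately show False by simp
qed

lemma L_mono: assumes "0 \<le> a" "a < b" "b \<le> 3/4" shows "L a t < L b t"
proof (rule ccontr)
  assume "\<not> L a t < L b t"
  then have ba: "L b t \<le> L a t" by simp
  have b0: "0 < L b t" using L_gt[of b t] assms by simp
  show False
  proof (cases "a = 0")
    case True then show ?thesis using ba b0 by simp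
  next
    case False
    have "continuous_on {0..a} (\<lambda>x. L x t)"
      by (rule continuous_on_subset[OF L_cont]) (use assms in auto)
    then obtain c where c: "0 \<le> c" "c \<le> a" "L c t = L b t"
      using IVT'[of "\<lambda>x. L x t" 0 "L b t" a] ba b0 assms by auto
    then show False using L_inj[of c b t] assms by simp
  qed
qed

lemma L_exp: assumes "0 \<le> a" "a < b" "b \<le> 3/4" shows "b - a \<le> L b t - L a t"
proof -
  have "continuous_on {a..b} (\<lambda>x. L x t)"
    by (rule continuous_on_subset[OF L_cont]) (use assms in auto)
  moreover have der: "\<And>z. a < z \<Longrightarrow> z < b \<Longrightarrow> ((\<lambda>y. L y t) has_derivative (\<lambda>k. fst (DFL (z, t) (k, 0)))) (at z)"
    by (rule L_deriv) (use assms in auto)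
  ultimately obtain \<xi> where xi: "a < \<xi>" "\<xi> < b" "L b t - L a t = fst (DFL (\<xi>, t) (b - a, 0))"
    by (rule mvt[OF assms(2)])
  have "\<bar>fst (DFL (\<xi>, t) (b - a, 0))\<bar> \<ge> \<bar>b - a\<bar>"
    by (rule DFL_fst) (use xi assms in auto)
  then show ?thesis using xi L_mono[OF assms, of t] by simp
qed

lemma L_le_h: assumes "0 \<le> x" "x \<le> 3/4" shows "L x t \<le> h t"
proof (cases "x = 3/4")
  case True then show ?thesis by (simp only: h_def order_refl)
next
  case False then have "x < 3/4" using assms by simp
  then show ?thesis using L_mono[of x "3/4" t] assms by (simp add: h_def)
qed

lemma u_lower: "\<exists>m0>0. \<forall>x t. 0 \<le> x \<and> x \<le> 3/4 \<longrightarrow> u (x, t) \<ge> m0"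
proof -
  let ?K = "{0..3/4::real} \<times> {0..1::real}"
  have K: "compact ?K" by (intro compact_Times compact_Icc)
  have ne: "?K \<noteq> {}" by auto
  have "continuous_on ?K u"
    by (rule continuous_on_subset[OF u_cont]) (auto simp: Sdom_def)
  from continuous_attains_inf[OF K ne this] obtain q where q: "q \<in> ?K" "\<And>y. y \<in> ?K \<Longrightarrow> u q \<le> u y"
    by blast
  have "q \<in> Sdom" using q(1) by (auto simp: Sdom_def)
  then have qpos: "u q > 0" by (rule upos)
  show ?thesis
  proof (intro exI[of _ "u q"] conjI allI impI qpos)
    fix x t :: real assume x: "0 \<le> x \<and> x \<le> 3/4"
    have "(x, frac t) \<in> ?K" using x frac_lt_1[of t] by auto
    then have "u q \<le> u (x, frac t)" by (rule q(2))
    then show "u q \<le> u (x, t)" using u_frac x by simp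
  qed
qed

end

context setting begin

lemma Fret_in_Y: assumes "p \<in> return_dom \<gamma> u" shows "Fret \<gamma> u p \<in> Y"
proof -
  from assms obtain n where "n \<ge> 1" "(fm ^^ n) p \<in> Y" by (auto simp: return_dom_def)
  then have "return_time \<gamma> u p \<ge> 1 \<and> (fm ^^ return_time \<gamma> u p) p \<in> Y"
    unfolding return_time_def by (rule LeastI[where P = "\<lambda>n. n \<ge> 1 \<and> (fm ^^ n) p \<in> Y", OF conjI])
  then show ?thesis by (simp add: Fret_def)
qed

lemma Fpow_Y: "U \<subseteq> Y \<Longrightarrow> Fpow_img \<gamma> u n U \<subseteq> Y"
  by (induction n) (auto intro: Fret_in_Y)

lemma ret_lemma:
  assumes "q \<in> S" "q \<in> Y" "r \<ge> 1" "(fm ^^ r) q \<in> Y"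
    and "\<And>j. 1 \<le> j \<Longrightarrow> j < r \<Longrightarrow> (fm ^^ j) q \<notin> Y"
  shows "(fm ^^ r) q \<in> Fret \<gamma> u ` (S \<inter> return_dom \<gamma> u)"
proof -
  have dom: "q \<in> return_dom \<gamma> u" using assms by (auto simp: return_dom_def)
  have "return_time \<gamma> u q = r"
    unfolding return_time_def
  proof (rule Least_equality)
    show "1 \<le> r \<and> (fm ^^ r) q \<in> Y" using assms by simp
    fix y assume "1 \<le> y \<and> (fm ^^ y) q \<in> Y"
    then show "r \<le> y" using assms(5)[of y] by (cases "y < r") auto
  qed
  then have "Fret \<gamma> u q = (fm ^^ r) q" by (simp add: Fret_def)
  then show ?thesis using dom assms(1) by (metis IntI image_eqI)
qed

definition Pend :: "(real \<times> complex) set \<Rightarrow> nat \<Rightarrow> real \<times> complex \<Rightarrow> bool" where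
  "Pend U n w \<longleftrightarrow> (\<exists>y j. y \<in> Fpow_img \<gamma> u n U \<and> y \<in> Y \<and> (fm ^^ j) y = w \<and>
      (\<forall>i. 1 \<le> i \<and> i \<le> j \<longrightarrow> (fm ^^ i) y \<notin> Y))"

lemma Pend_init: "y \<in> Fpow_img \<gamma> u n U \<Longrightarrow> y \<in> Y \<Longrightarrow> Pend U n y"
  unfolding Pend_def by (rule exI[of _ y], rule exI[of _ 0]) auto

lemma Pend_out: assumes "Pend U n w" "fm w \<notin> Y" shows "Pend U n (fm w)"
proof -
  from assms(1) obtain y j where y: "y \<in> Fpow_img \<gamma> u n U" "y \<in> Y" "(fm ^^ j) y = w"
    "\<And>i. 1 \<le> i \<Longrightarrow> i \<le> j \<Longrightarrow> (fm ^^ i) y \<notin> Y" unfolding Pend_def by blast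
  have "(fm ^^ Suc j) y = fm w" using y(3) by simp
  moreover have "(fm ^^ i) y \<notin> Y" if "1 \<le> i" "i \<le> Suc j" for i
  proof (cases "i = Suc j")
    case True then show ?thesis using assms(2) \<open>(fm ^^ Suc j) y = fm w\<close> by simp
  next
    case False then show ?thesis using y(4) that by simp
  qed
  ultimately show ?thesis unfolding Pend_def using y(1,2) by blast
qed

lemma Pend_in: assumes "Pend U n w" "fm w \<in> Y" shows "fm w \<in> Fpow_img \<gamma> u (Suc n) U"
proof -
  from assms(1) obtain y j where y: "y \<in> Fpow_img \<gamma> u n U" "y \<in> Y" "(fm ^^ j) y = w"
    "\<And>i. 1 \<le> i \<Longrightarrow> i \<le> j \<Longrightarrow> (fm ^^ i) y \<notin> Y" unfolding Pend_def by blast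
  have e: "(fm ^^ Suc j) y = fm w" using y(3) by simp
  have "(fm ^^ Suc j) y \<in> Fret \<gamma> u ` (Fpow_img \<gamma> u n U \<inter> return_dom \<gamma> u)"
    by (rule ret_lemma[OF y(1) y(2)]) (use e assms(2) y(4) in auto)
  then show ?thesis using e by simp
qed

lemma Pend_Y: "Pend U n w \<Longrightarrow> w \<in> Y \<Longrightarrow> w \<in> Fpow_img \<gamma> u n U"
  unfolding Pend_def by (metis funpow_0 le_refl less_one not_less)

end

locale strip_setting = setting +
  fixes U :: "(real \<times> complex) set" and s0 :: real
  assumes UY: "U \<subseteq> Yset \<gamma> u"
begin

definition Strip :: "nat \<Rightarrow> nat \<Rightarrow> (real \<Rightarrow> real) \<Rightarrow> (real \<Rightarrow> real) \<Rightarrow> bool" where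
  "Strip n m a b \<longleftrightarrow> isCont a s0 \<and> isCont b s0 \<and> 0 < a s0 \<and> a s0 < b s0 \<and> b s0 \<le> 1 \<and>
     (\<forall>\<^sub>F s in at s0. \<forall>x. a s \<le> x \<and> x \<le> b s \<longrightarrow> Pend U n (P x ((4::real) ^ m * s)))"

definition Goal :: "nat \<Rightarrow> nat \<Rightarrow> real \<Rightarrow> bool" where
  "Goal n m \<delta> \<longleftrightarrow> 0 < \<delta> \<and>
     (\<forall>\<^sub>F s in at s0. \<forall>x. 3/4 < x \<and> x \<le> 3/4 + \<delta> \<longrightarrow> P x ((4::real) ^ m * s) \<in> Fpow_img \<gamma> u n U)"

lemma ev_gt: fixes f :: "real \<Rightarrow> real" assumes "isCont f s0" "c < f s0" shows "\<forall>\<^sub>F s in at s0. c < f s"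
proof -
  have "(f \<longlongrightarrow> f s0) (at s0)" using assms(1) by (simp add: isCont_def)
  then show ?thesis using assms(2) by (rule order_tendstoD(1))
qed

lemma ev_lt: fixes f :: "real \<Rightarrow> real" assumes "isCont f s0" "f s0 < c" shows "\<forall>\<^sub>F s in at s0. f s < c"
proof -
  have "(f \<longlongrightarrow> f s0) (at s0)" using assms(1) by (simp add: isCont_def)
  then show ?thesis using assms(2) by (rule order_tendstoD(2))
qed

lemma pow4: "4 * ((4::real) ^ m * s) = 4 ^ Suc m * s"
  by simp

lemma Rimg:
  assumes "Strip n m a b" "3/4 < a s0"
  shows "\<forall>\<^sub>F s in at s0. \<forall>x'. 4 * a s - 3 \<le> x' \<and> x' \<le> 4 * b s - 3 \<longrightarrow>
     (3/4 \<le> x' \<and> x' \<le> G (4 ^ Suc m * s) \<longrightarrow> P x' (4 ^ Suc m * s) \<in> Fpow_img \<gamma> u (Suc n) U) \<and>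
     (\<not> (3/4 \<le> x' \<and> x' \<le> G (4 ^ Suc m * s)) \<longrightarrow> Pend U n (P x' (4 ^ Suc m * s)))"
proof -
  have e1: "\<forall>\<^sub>F s in at s0. 3/4 < a s" using ev_gt assms unfolding Strip_def by blast
  have e2: "\<forall>\<^sub>F s in at s0. \<forall>x. a s \<le> x \<and> x \<le> b s \<longrightarrow> Pend U n (P x ((4::real) ^ m * s))"
    using assms unfolding Strip_def by blast
  show ?thesis using e1 e2
  proof eventually_elim
    case (elim s)
    show ?case
    proof (intro allI impI)
      fix x' assume r: "4 * a s - 3 \<le> x' \<and> x' \<le> 4 * b s - 3"
      define x where "x = (x' + 3) / 4"
      have xr: "a s \<le> x \<and> x \<le> b s" using r by (simp add: x_def)
      then have pend: "Pend U n (P x ((4::real) ^ m * s))" using elim by blast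
      have x34: "3/4 < x" using xr elim by simp
      have "fm (P x ((4::real) ^ m * s)) = P (F1 x (4 ^ m * s)) (4 * (4 ^ m * s))"
        by (rule fm_P) (use x34 in simp)
      also have "F1 x (4 ^ m * s) = 4 * x - 3" using x34 by (simp add: F1_def)
      also have "4 * x - 3 = x'" by (simp add: x_def field_simps)
      finally have fmx: "fm (P x ((4::real) ^ m * s)) = P x' (4 ^ Suc m * s)" by (simp only: pow4)
      show "(3/4 \<le> x' \<and> x' \<le> G (4 ^ Suc m * s) \<longrightarrow> P x' (4 ^ Suc m * s) \<in> Fpow_img \<gamma> u (Suc n) U) \<and>
        (\<not> (3/4 \<le> x' \<and> x' \<le> G (4 ^ Suc m * s)) \<longrightarrow> Pend U n (P x' (4 ^ Suc m * s)))"
      proof (intro conjI impI)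
        assume "3/4 \<le> x' \<and> x' \<le> G (4 ^ Suc m * s)"
        then have "fm (P x ((4::real) ^ m * s)) \<in> Y" using fmx Y_P by simp
        then show "P x' (4 ^ Suc m * s) \<in> Fpow_img \<gamma> u (Suc n) U" using Pend_in[OF pend] fmx by simp
      next
        assume "\<not> (3/4 \<le> x' \<and> x' \<le> G (4 ^ Suc m * s))"
        then have "fm (P x ((4::real) ^ m * s)) \<notin> Y" using fmx Y_P by simp
        then show "Pend U n (P x' (4 ^ Suc m * s))" using Pend_out[OF pend] fmx by simp
      qed
    qed
  qed
qed

lemma Limg:
  assumes "Strip n m a b" "b s0 < 3/4"
  shows "\<forall>\<^sub>F s in at s0. \<forall>x'. L (a s) (4 ^ m * s) \<le> x' \<and> x' \<le> L (b s) (4 ^ m * s) \<longrightarrow>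
     (3/4 \<le> x' \<longrightarrow> P x' (4 ^ Suc m * s) \<in> Fpow_img \<gamma> u (Suc n) U) \<and>
     (x' < 3/4 \<longrightarrow> Pend U n (P x' (4 ^ Suc m * s)))"
proof -
  have ca: "isCont a s0" and cb: "isCont b s0" using assms unfolding Strip_def by auto
  have e1: "\<forall>\<^sub>F s in at s0. 0 < a s" using ev_gt ca assms unfolding Strip_def by blast
  have e2: "\<forall>\<^sub>F s in at s0. b s < 3/4" using ev_lt cb assms by blast
  have cba: "isCont (\<lambda>s. b s - a s) s0" by (rule continuous_diff[OF cb ca])
  have "0 < b s0 - a s0" using assms unfolding Strip_def by auto
  then have e3: "\<forall>\<^sub>F s in at s0. 0 < b s - a s" using ev_gt[OF cba] by blast
  have e4: "\<forall>\<^sub>F s in at s0. \<forall>x. a s \<le> x \<and> x \<le> b s \<longrightarrow> Pend U n (P x ((4::real) ^ m * s))"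
    using assms unfolding Strip_def by blast
  show ?thesis using e1 e2 e3 e4
  proof eventually_elim
    case (elim s)
    let ?t = "(4::real) ^ m * s"
    show ?case
    proof (intro allI impI)
      fix x' assume r: "L (a s) ?t \<le> x' \<and> x' \<le> L (b s) ?t"
      have "continuous_on {a s..b s} (\<lambda>x. L x ?t)"
        by (rule continuous_on_subset[OF L_cont]) (use elim in auto)
      then obtain x where x: "a s \<le> x" "x \<le> b s" "L x ?t = x'"
        using IVT'[of "\<lambda>x. L x ?t" "a s" x' "b s"] r elim by auto
      have pend: "Pend U n (P x ?t)" using elim x by blast
      have x0: "0 \<le> x" "x \<le> 3/4" using x elim by auto
      have "fm (P x ?t) = P (F1 x ?t) (4 * ?t)" by (rule fm_P) (use x0 in simp)
      also have "F1 x ?t = x'" using x0 x by (simp add: F1_def)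
      finally have fmx: "fm (P x ?t) = P x' (4 ^ Suc m * s)" by (simp only: pow4)
      show "(3/4 \<le> x' \<longrightarrow> P x' (4 ^ Suc m * s) \<in> Fpow_img \<gamma> u (Suc n) U) \<and>
        (x' < 3/4 \<longrightarrow> Pend U n (P x' (4 ^ Suc m * s)))"
      proof (intro conjI impI)
        assume x': "3/4 \<le> x'"
        have "x' \<le> h ?t" using L_le_h[OF x0, of ?t] x(3) by simp
        also have "\<dots> \<le> G (4 * ?t)" by (rule h_le_G)
        finally have "x' \<le> G (4 ^ Suc m * s)" by (simp only: pow4)
        then have "fm (P x ?t) \<in> Y" using fmx Y_P x' by simp
        then show "P x' (4 ^ Suc m * s) \<in> Fpow_img \<gamma> u (Suc n) U" using Pend_in[OF pend] fmx by simp
      next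
        assume "x' < 3/4"
        then have "fm (P x ?t) \<notin> Y" using fmx Y_P by simp
        then show "Pend U n (P x' (4 ^ Suc m * s))" using Pend_out[OF pend] fmx by simp
      qed
    qed
  qed
qed

end

context strip_setting begin

lemma Fpow_Pend: "w \<in> Fpow_img \<gamma> u n U \<Longrightarrow> Pend U n w"
  using Pend_init Fpow_Y[OF UY] by blast

lemma StripI:
  assumes "isCont a s0" "isCont b s0" "0 < a s0" "a s0 < b s0" "b s0 \<le> 1"
    "\<forall>\<^sub>F s in at s0. \<forall>x. a s \<le> x \<and> x \<le> b s \<longrightarrow> Pend U n (P x ((4::real) ^ m * s))"
  shows "Strip n m a b"
  using assms unfolding Strip_def by blast

lemma StripD:
  assumes "Strip n m a b"
  shows "isCont a s0" "isCont b s0" "0 < a s0" "a s0 < b s0" "b s0 \<le> 1"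
    "\<forall>\<^sub>F s in at s0. \<forall>x. a s \<le> x \<and> x \<le> b s \<longrightarrow> Pend U n (P x ((4::real) ^ m * s))"
  using assms unfolding Strip_def by blast+

abbreviation RES :: "real \<Rightarrow> real \<Rightarrow> bool" where
  "RES c l \<equiv> (\<exists>n' m' \<delta>. Goal n' m' \<delta>) \<or>
     (\<exists>n' m' a' b'. Strip n' m' a' b' \<and> 3/4 < a' s0 \<and> c * l \<le> b' s0 - a' s0)"

lemma LSexit:
  assumes S: "Strip n m a b" and b34: "b s0 < 3/4" and Bgt: "3/4 < L (b s0) (4 ^ m * s0)"
  shows "RES (9/10) (b s0 - a s0)"
proof -
  define a' where "a' = (\<lambda>s. L (a s) (4 ^ m * s))"
  define b' where "b' = (\<lambda>s. L (b s) (4 ^ m * s))"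
  define l where "l = b s0 - a s0"
  note SD = StripD[OF S]
  have ca': "isCont a' s0" unfolding a'_def by (rule L_isCont_comp) (use SD b34 in auto)
  have cb': "isCont b' s0" unfolding b'_def by (rule L_isCont_comp) (use SD b34 in auto)
  have len: "l \<le> b' s0 - a' s0" unfolding a'_def b'_def l_def
    by (rule L_exp) (use SD b34 in auto)
  have lpos: "0 < l" using SD by (simp add: l_def)
  have "a s0 < L (a s0) (4 ^ m * s0)" by (rule L_gt) (use SD b34 in auto)
  then have a'pos: "0 < a' s0" unfolding a'_def using SD(3) by linarith
  have b'1: "b' s0 \<le> 1" unfolding b'_def by (rule L_le1) (use SD b34 in auto)
  have img: "\<forall>\<^sub>F s in at s0. \<forall>x'. a' s \<le> x' \<and> x' \<le> b' s \<longrightarrow>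
     (3/4 \<le> x' \<longrightarrow> P x' (4 ^ Suc m * s) \<in> Fpow_img \<gamma> u (Suc n) U) \<and>
     (x' < 3/4 \<longrightarrow> Pend U n (P x' (4 ^ Suc m * s)))"
    using Limg[OF S b34] unfolding a'_def b'_def .
  have B: "3/4 < b' s0" using Bgt by (simp add: b'_def)
  consider (lt) "a' s0 < 3/4" | (gt) "3/4 < a' s0" | (eq) "a' s0 = 3/4" by linarith
  then show ?thesis
  proof cases
    case lt
    define \<delta> where "\<delta> = min (3/16) ((b' s0 - 3/4)/2)"
    have dpos: "0 < \<delta>" using B by (simp add: \<delta>_def)
    have "\<delta> \<le> (b' s0 - 3/4)/2" unfolding \<delta>_def by (rule min.cobounded2)
    then have "3/4 + \<delta> < b' s0" using B by (simp add: field_simps)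
    then have e2: "\<forall>\<^sub>F s in at s0. 3/4 + \<delta> < b' s" by (rule ev_gt[OF cb'])
    have e1: "\<forall>\<^sub>F s in at s0. a' s < 3/4" using lt by (rule ev_lt[OF ca'])
    have "\<forall>\<^sub>F s in at s0. \<forall>x. 3/4 < x \<and> x \<le> 3/4 + \<delta> \<longrightarrow> P x ((4::real) ^ Suc m * s) \<in> Fpow_img \<gamma> u (Suc n) U"
      using e1 e2 img
    proof eventually_elim
      case (elim s)
      show ?case
      proof (intro allI impI)
        fix x assume "3/4 < x \<and> x \<le> 3/4 + \<delta>"
        then show "P x ((4::real) ^ Suc m * s) \<in> Fpow_img \<gamma> u (Suc n) U" using elim by auto
      qed
    qed
    then have "Goal (Suc n) (Suc m) \<delta>" unfolding Goal_def using dpos by blast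
    then show ?thesis by blast
  next
    case gt
    have e1: "\<forall>\<^sub>F s in at s0. 3/4 < a' s" using gt by (rule ev_gt[OF ca'])
    have "\<forall>\<^sub>F s in at s0. \<forall>x. a' s \<le> x \<and> x \<le> b' s \<longrightarrow> Pend U (Suc n) (P x ((4::real) ^ Suc m * s))"
      using e1 img
    proof eventually_elim
      case (elim s)
      show ?case
      proof (intro allI impI)
        fix x assume "a' s \<le> x \<and> x \<le> b' s"
        then show "Pend U (Suc n) (P x ((4::real) ^ Suc m * s))" using elim Fpow_Pend by auto
      qed
    qed
    then have "Strip (Suc n) (Suc m) a' b'"
      by (intro StripI ca' cb' a'pos b'1) (use len lpos in auto)
    moreover have "9/10 * (b s0 - a s0) \<le> b' s0 - a' s0" using len lpos by (simp add: l_def)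
    ultimately show ?thesis using gt by blast
  next
    case eq
    define a'' where "a'' = (\<lambda>s. a' s + l / 10)"
    have ca'': "isCont a'' s0" unfolding a''_def by (intro continuous_add ca' continuous_const)
    have "3/4 < a'' s0" using eq lpos by (simp add: a''_def)
    then have e1: "\<forall>\<^sub>F s in at s0. 3/4 < a'' s" by (rule ev_gt[OF ca''])
    have "\<forall>\<^sub>F s in at s0. \<forall>x. a'' s \<le> x \<and> x \<le> b' s \<longrightarrow> Pend U (Suc n) (P x ((4::real) ^ Suc m * s))"
      using e1 img
    proof eventually_elim
      case (elim s)
      show ?case
      proof (intro allI impI)
        fix x assume x: "a'' s \<le> x \<and> x \<le> b' s"
        have "a' s \<le> x" using x lpos by (simp add: a''_def)
        then show "Pend U (Suc n) (P x ((4::real) ^ Suc m * s))" using x elim Fpow_Pend by auto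
      qed
    qed
    then have "Strip (Suc n) (Suc m) a'' b'"
      by (intro StripI ca'' cb' b'1) (use len lpos a'pos in \<open>auto simp: a''_def\<close>)
    moreover have "3/4 < a'' s0" using eq lpos by (simp add: a''_def)
    moreover have "9/10 * (b s0 - a s0) \<le> b' s0 - a'' s0" using len unfolding a''_def l_def by argo
    ultimately show ?thesis by blast
  qed
qed

end

context strip_setting begin

lemma RES_weaken:
  assumes "RES c l'" "c' * l \<le> c * l'"
  shows "RES c' l"
  using assms(1)
proof (elim disjE exE conjE)
  fix n' m' \<delta> assume "Goal n' m' \<delta>" then show ?thesis by blast
next
  fix n' m' a' b' assume S: "Strip n' m' a' b'" "3/4 < a' s0" "c * l' \<le> b' s0 - a' s0"
  then have "c' * l \<le> b' s0 - a' s0" using assms(2) by linarith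
  then show ?thesis using S by blast
qed

lemma LS_aux:
  assumes c: "0 < c" and kap: "\<And>x t. c \<le> x \<Longrightarrow> x \<le> 3/4 \<Longrightarrow> \<kappa> \<le> L x t - x" and kpos: "0 < \<kappa>"
  shows "Strip n m a b \<Longrightarrow> b s0 < 3/4 \<Longrightarrow> c \<le> a s0 \<Longrightarrow> 3/4 < a s0 + real k * \<kappa> \<Longrightarrow>
    RES (81/100) (b s0 - a s0)"
proof (induction k arbitrary: n m a b)
  case 0
  then show ?case using StripD(4)[OF 0(1)] by simp
next
  case (Suc k)
  note S = Suc.prems(1) and b34 = Suc.prems(2)
  define a' where "a' = (\<lambda>s. L (a s) (4 ^ m * s))"
  define b' where "b' = (\<lambda>s. L (b s) (4 ^ m * s))"
  define l where "l = b s0 - a s0"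
  note SD = StripD[OF S]
  have ca': "isCont a' s0" unfolding a'_def by (rule L_isCont_comp) (use SD b34 in auto)
  have cb': "isCont b' s0" unfolding b'_def by (rule L_isCont_comp) (use SD b34 in auto)
  have len: "l \<le> b' s0 - a' s0" unfolding a'_def b'_def l_def
    by (rule L_exp) (use SD b34 in auto)
  have lpos: "0 < l" using SD by (simp add: l_def)
  have "\<kappa> \<le> L (a s0) (4 ^ m * s0) - a s0" by (rule kap) (use Suc.prems SD b34 in auto)
  then have a'k: "a s0 + \<kappa> \<le> a' s0" unfolding a'_def by simp
  have a'pos: "0 < a' s0" using a'k SD kpos by linarith
  have b'1: "b' s0 \<le> 1" unfolding b'_def by (rule L_le1) (use SD b34 in auto)
  have img: "\<forall>\<^sub>F s in at s0. \<forall>x'. a' s \<le> x' \<and> x' \<le> b' s \<longrightarrow>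
     (3/4 \<le> x' \<longrightarrow> P x' (4 ^ Suc m * s) \<in> Fpow_img \<gamma> u (Suc n) U) \<and>
     (x' < 3/4 \<longrightarrow> Pend U n (P x' (4 ^ Suc m * s)))"
    using Limg[OF S b34] unfolding a'_def b'_def .
  consider (lt) "b' s0 < 3/4" | (gt) "3/4 < b' s0" | (eq) "b' s0 = 3/4" by linarith
  then show ?case
  proof cases
    case lt
    have e1: "\<forall>\<^sub>F s in at s0. b' s < 3/4" using lt by (rule ev_lt[OF cb'])
    have "\<forall>\<^sub>F s in at s0. \<forall>x. a' s \<le> x \<and> x \<le> b' s \<longrightarrow> Pend U n (P x ((4::real) ^ Suc m * s))"
      using e1 img
    proof eventually_elim
      case (elim s)
      show ?case
      proof (intro allI impI)
        fix x assume "a' s \<le> x \<and> x \<le> b' s"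
        then show "Pend U n (P x ((4::real) ^ Suc m * s))" using elim by auto
      qed
    qed
    then have S': "Strip n (Suc m) a' b'"
      by (intro StripI ca' cb' a'pos b'1) (use len lpos in auto)
    have "3/4 < a' s0 + real k * \<kappa>" using Suc.prems(4) a'k by (simp add: algebra_simps)
    moreover have "c \<le> a' s0" using a'k Suc.prems(3) kpos by linarith
    ultimately have "RES (81/100) (b' s0 - a' s0)" using Suc.IH[OF S' lt] by blast
    then show ?thesis by (rule RES_weaken) (use len in \<open>simp add: l_def\<close>)
  next
    case gt
    have "RES (9/10) (b s0 - a s0)" by (rule LSexit[OF S b34]) (use gt in \<open>simp add: b'_def\<close>)
    then show ?thesis by (rule RES_weaken) (use lpos in \<open>simp add: l_def\<close>)
  next
    case eq
    define t1 where "t1 = (4::real) ^ Suc m * s0"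
    have "h t1 - 3/4 > 0" using h_gt[of t1] by simp
    then obtain d where d: "d > 0" "\<And>y. y \<in> {0..3/4} \<Longrightarrow> dist y (3/4) < d \<Longrightarrow> dist (L y t1) (L (3/4) t1) < h t1 - 3/4"
      using L_cont[of t1] unfolding continuous_on_iff by (metis atLeastAtMost_iff order_refl zero_le_divide_iff zero_le_numeral)
    define \<epsilon> where "\<epsilon> = min (l/10) (d/2)"
    have epos: "0 < \<epsilon>" using d lpos by (simp add: \<epsilon>_def)
    have el: "\<epsilon> \<le> l/10" unfolding \<epsilon>_def by (rule min.cobounded1)
    have ed: "\<epsilon> \<le> d/2" unfolding \<epsilon>_def by (rule min.cobounded2)
    define b'' where "b'' = (\<lambda>s. b' s - \<epsilon>)"
    have cb'': "isCont b'' s0" unfolding b''_def by (intro continuous_diff cb' continuous_const)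
    have b''0: "b'' s0 = 3/4 - \<epsilon>" using eq by (simp add: b''_def)
    have e1: "\<forall>\<^sub>F s in at s0. b'' s < 3/4" using b''0 epos by (intro ev_lt[OF cb'']) simp
    have "\<forall>\<^sub>F s in at s0. \<forall>x. a' s \<le> x \<and> x \<le> b'' s \<longrightarrow> Pend U n (P x ((4::real) ^ Suc m * s))"
      using e1 img
    proof eventually_elim
      case (elim s)
      show ?case
      proof (intro allI impI)
        fix x assume x: "a' s \<le> x \<and> x \<le> b'' s"
        have "x \<le> b' s" using x epos by (simp add: b''_def)
        then show "Pend U n (P x ((4::real) ^ Suc m * s))" using x elim by auto
      qed
    qed
    moreover have "a' s0 < b'' s0" using b''0 len eq el lpos by argo
    moreover have "b'' s0 \<le> 1" using b''0 epos by simp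
    ultimately have S'': "Strip n (Suc m) a' b''"
      by (intro StripI ca' cb'' a'pos)
    have "b'' s0 \<in> {0..3/4}" using b''0 epos ed el lpos len eq a'pos by auto
    moreover have "dist (b'' s0) (3/4) < d" using b''0 epos ed d by (simp add: dist_real_def)
    ultimately have "dist (L (b'' s0) t1) (L (3/4) t1) < h t1 - 3/4" by (rule d(2))
    then have "3/4 < L (b'' s0) t1" by (simp add: dist_real_def h_def abs_less_iff)
    then have "RES (9/10) (b'' s0 - a' s0)"
      using LSexit[OF S''] b''0 epos unfolding t1_def by simp
    then show ?thesis by (rule RES_weaken) (use b''0 len eq el lpos in \<open>simp add: l_def\<close>)
  qed
qed

end

context strip_setting begin

lemma LS:
  assumes S: "Strip n m a b" and b34: "b s0 < 3/4"
  shows "RES (81/100) (b s0 - a s0)"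
proof -
  obtain m0 where m0: "m0 > 0" "\<And>x t. 0 \<le> x \<and> x \<le> 3/4 \<Longrightarrow> m0 \<le> u (x, t)"
    using u_lower by blast
  define c where "c = a s0"
  have cpos: "0 < c" using StripD(3)[OF S] by (simp add: c_def)
  define \<kappa> where "\<kappa> = c * (c powr \<gamma> * m0)"
  have kpos: "0 < \<kappa>" using cpos m0 by (simp add: \<kappa>_def)
  have kap: "\<kappa> \<le> L x t - x" if x: "c \<le> x" "x \<le> 3/4" for x t
  proof -
    have eq: "L x t - x = x * (x powr \<gamma> * u (x, t))" by (simp add: L_def algebra_simps)
    have "c powr \<gamma> \<le> x powr \<gamma>" by (rule powr_mono2) (use gpos cpos x in auto)
    moreover have "m0 \<le> u (x, t)" by (rule m0(2)) (use cpos x in auto)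
    ultimately have cm: "c powr \<gamma> * m0 \<le> x powr \<gamma> * u (x, t)"
      by (rule mult_mono) (use m0 in auto)
    have "c * (c powr \<gamma> * m0) \<le> x * (x powr \<gamma> * u (x, t))"
      by (rule mult_mono[OF _ cm]) (use x cpos m0 in auto)
    then show ?thesis using eq by (simp add: \<kappa>_def)
  qed
  obtain k :: nat where k: "(3/4) / \<kappa> < real k" using reals_Archimedean2 by blast
  then have "3/4 < real k * \<kappa>" using kpos by (simp add: pos_divide_less_eq)
  then have kk: "3/4 < a s0 + real k * \<kappa>" using cpos c_def by linarith
  have ca: "c \<le> a s0" by (simp add: c_def)
  show ?thesis using LS_aux[of c \<kappa>, OF cpos kap kpos S b34 ca kk] by blast
qed

lemma G_scaled_isCont: "isCont (\<lambda>s. G ((4::real) ^ k * s)) s0"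
  by (rule isCont_o2[OF continuous_mult[OF continuous_const continuous_ident] G_isCont])

lemma RS:
  assumes S: "Strip n m a b" and a34: "3/4 < a s0"
  shows "RES (7/5) (b s0 - a s0)"
proof -
  note SD = StripD[OF S]
  define l where "l = b s0 - a s0"
  define a1 where "a1 = (\<lambda>s. 4 * a s - 3)"
  define b1 where "b1 = (\<lambda>s. 4 * b s - 3)"
  define g where "g = G ((4::real) ^ Suc m * s0)"
  define Gs where "Gs = (\<lambda>s. G ((4::real) ^ Suc m * s))"
  have cGs: "isCont Gs s0" unfolding Gs_def by (rule G_scaled_isCont)
  have g_Gs: "Gs s0 = g" by (simp add: Gs_def g_def)
  have ca1: "isCont a1 s0" unfolding a1_def using SD(1) by (intro continuous_diff continuous_mult continuous_const)
  have cb1: "isCont b1 s0" unfolding b1_def using SD(2) by (intro continuous_diff continuous_mult continuous_const)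
  have lpos: "0 < l" using SD by (simp add: l_def)
  have BA: "b1 s0 - a1 s0 = 4 * l" by (simp add: a1_def b1_def l_def)
  have A0: "0 < a1 s0" using a34 by (simp add: a1_def)
  have B1: "b1 s0 \<le> 1" using SD(5) by (simp add: b1_def)
  have g1: "15/16 < g" "g \<le> 1" using G_gt G_le1 by (simp_all add: g_def)
  have img: "\<forall>\<^sub>F s in at s0. \<forall>x'. a1 s \<le> x' \<and> x' \<le> b1 s \<longrightarrow>
     (3/4 \<le> x' \<and> x' \<le> Gs s \<longrightarrow> P x' (4 ^ Suc m * s) \<in> Fpow_img \<gamma> u (Suc n) U) \<and>
     (\<not> (3/4 \<le> x' \<and> x' \<le> Gs s) \<longrightarrow> Pend U n (P x' (4 ^ Suc m * s)))"
    using Rimg[OF S a34] unfolding a1_def b1_def Gs_def .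
  consider (straddle) "a1 s0 < 3/4" "3/4 < b1 s0" | (left) "b1 s0 < 3/4" | (edge) "b1 s0 = 3/4"
    | (right) "3/4 \<le> a1 s0" by linarith
  then show ?thesis
  proof cases
    case straddle
    define \<delta> where "\<delta> = min (3/16) ((b1 s0 - 3/4)/2)"
    have dpos: "0 < \<delta>" using straddle by (simp add: \<delta>_def)
    have d1: "\<delta> \<le> 3/16" unfolding \<delta>_def by (rule min.cobounded1)
    have "\<delta> \<le> (b1 s0 - 3/4)/2" unfolding \<delta>_def by (rule min.cobounded2)
    then have "3/4 + \<delta> < b1 s0" using straddle by argo
    then have e2: "\<forall>\<^sub>F s in at s0. 3/4 + \<delta> < b1 s" by (rule ev_gt[OF cb1])
    have e1: "\<forall>\<^sub>F s in at s0. a1 s < 3/4" using straddle(1) by (rule ev_lt[OF ca1])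
    have "\<forall>\<^sub>F s in at s0. \<forall>x. 3/4 < x \<and> x \<le> 3/4 + \<delta> \<longrightarrow> P x ((4::real) ^ Suc m * s) \<in> Fpow_img \<gamma> u (Suc n) U"
      using e1 e2 img
    proof eventually_elim
      case (elim s)
      show ?case
      proof (intro allI impI)
        fix x assume x: "3/4 < x \<and> x \<le> 3/4 + \<delta>"
        have "x \<le> Gs s" using x d1 G_gt[of "4 ^ Suc m * s"] by (simp add: Gs_def)
        then show "P x ((4::real) ^ Suc m * s) \<in> Fpow_img \<gamma> u (Suc n) U" using x elim by auto
      qed
    qed
    then have "Goal (Suc n) (Suc m) \<delta>" unfolding Goal_def using dpos by blast
    then show ?thesis by blast
  next
    case left
    have e1: "\<forall>\<^sub>F s in at s0. b1 s < 3/4" using left by (rule ev_lt[OF cb1])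
    have "\<forall>\<^sub>F s in at s0. \<forall>x. a1 s \<le> x \<and> x \<le> b1 s \<longrightarrow> Pend U n (P x ((4::real) ^ Suc m * s))"
      using e1 img
    proof eventually_elim
      case (elim s)
      show ?case
      proof (intro allI impI)
        fix x assume "a1 s \<le> x \<and> x \<le> b1 s"
        then show "Pend U n (P x ((4::real) ^ Suc m * s))" using elim by auto
      qed
    qed
    then have S': "Strip n (Suc m) a1 b1"
      by (intro StripI ca1 cb1 A0) (use BA lpos left in auto)
    have "RES (81/100) (b1 s0 - a1 s0)" by (rule LS[OF S' left])
    then show ?thesis by (rule RES_weaken) (use BA lpos in \<open>simp add: l_def\<close>)
  next
    case edge
    define b2 where "b2 = (\<lambda>s. b1 s - l)"
    have cb2: "isCont b2 s0" unfolding b2_def by (intro continuous_diff cb1 continuous_const)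
    have e1: "\<forall>\<^sub>F s in at s0. b2 s < 3/4" using edge lpos by (intro ev_lt[OF cb2]) (simp add: b2_def)
    have "\<forall>\<^sub>F s in at s0. \<forall>x. a1 s \<le> x \<and> x \<le> b2 s \<longrightarrow> Pend U n (P x ((4::real) ^ Suc m * s))"
      using e1 img
    proof eventually_elim
      case (elim s)
      show ?case
      proof (intro allI impI)
        fix x assume x: "a1 s \<le> x \<and> x \<le> b2 s"
        then have "x \<le> b1 s" using lpos by (simp add: b2_def)
        then show "Pend U n (P x ((4::real) ^ Suc m * s))" using x elim by auto
      qed
    qed
    moreover have "a1 s0 < b2 s0" using BA lpos by (simp add: b2_def)
    moreover have "b2 s0 \<le> 1" using B1 lpos by (simp add: b2_def)
    ultimately have S': "Strip n (Suc m) a1 b2"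
      by (intro StripI ca1 cb2 A0)
    have "RES (81/100) (b2 s0 - a1 s0)" by (rule LS[OF S']) (use edge lpos in \<open>simp add: b2_def\<close>)
    then show ?thesis by (rule RES_weaken) (use BA lpos in \<open>simp add: l_def b2_def\<close>)
  next
    case right
    define a2 where "a2 = (\<lambda>s. a1 s + l/2)"
    have ca2: "isCont a2 s0" unfolding a2_def by (intro continuous_add ca1 continuous_const)
    have a2_34: "3/4 < a2 s0" using right lpos by (simp add: a2_def)
    have e0: "\<forall>\<^sub>F s in at s0. 3/4 < a2 s" using a2_34 by (rule ev_gt[OF ca2])
    have a2a1: "a1 s \<le> a2 s" for s using lpos by (simp add: a2_def)
    consider (inY) "b1 s0 < g" | (outY) "g < a2 s0" | (mid) "a2 s0 \<le> g" "g \<le> b1 s0" by linarith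
    then show ?thesis
    proof cases
      case inY
      have e1: "\<forall>\<^sub>F s in at s0. 0 < Gs s - b1 s" using inY g_Gs
        by (intro ev_gt continuous_diff cGs cb1) simp
      have "\<forall>\<^sub>F s in at s0. \<forall>x. a2 s \<le> x \<and> x \<le> b1 s \<longrightarrow> Pend U (Suc n) (P x ((4::real) ^ Suc m * s))"
        using e0 e1 img
      proof eventually_elim
        case (elim s)
        show ?case
        proof (intro allI impI)
          fix x assume x: "a2 s \<le> x \<and> x \<le> b1 s"
          then have "a1 s \<le> x" "3/4 \<le> x" "x \<le> Gs s" using a2a1[of s] elim by auto
          then show "Pend U (Suc n) (P x ((4::real) ^ Suc m * s))" using x elim Fpow_Pend by auto
        qed
      qed
      then have S': "Strip (Suc n) (Suc m) a2 b1"
        by (intro StripI ca2 cb1 B1) (use a2_34 BA lpos in \<open>auto simp: a2_def\<close>)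
      moreover have "7/5 * l \<le> b1 s0 - a2 s0" using BA lpos by (simp add: a2_def)
      ultimately show ?thesis using a2_34 by (auto simp: l_def)
    next
      case outY
      have e1: "\<forall>\<^sub>F s in at s0. 0 < a2 s - Gs s" using outY g_Gs
        by (intro ev_gt continuous_diff cGs ca2) simp
      have "\<forall>\<^sub>F s in at s0. \<forall>x. a2 s \<le> x \<and> x \<le> b1 s \<longrightarrow> Pend U n (P x ((4::real) ^ Suc m * s))"
        using e1 img
      proof eventually_elim
        case (elim s)
        show ?case
        proof (intro allI impI)
          fix x assume x: "a2 s \<le> x \<and> x \<le> b1 s"
          then have "a1 s \<le> x" "Gs s < x" using a2a1[of s] elim by auto
          then show "Pend U n (P x ((4::real) ^ Suc m * s))" using x elim by auto
        qed
      qed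
      then have S': "Strip n (Suc m) a2 b1"
        by (intro StripI ca2 cb1 B1) (use a2_34 BA lpos in \<open>auto simp: a2_def\<close>)
      moreover have "7/5 * l \<le> b1 s0 - a2 s0" using BA lpos by (simp add: a2_def)
      ultimately show ?thesis using a2_34 by (auto simp: l_def)
    next
      case mid
      show ?thesis
      proof (cases "a2 s0 + 7 * l / 4 \<le> g")
        case True
        define b3 where "b3 = (\<lambda>s::real. g - l/4)"
        have cb3: "isCont b3 s0" unfolding b3_def by (rule continuous_const)
        have e1: "\<forall>\<^sub>F s in at s0. g - l/4 < Gs s" using g_Gs lpos by (intro ev_gt cGs) simp
        have e2: "\<forall>\<^sub>F s in at s0. g - l/4 < b1 s" using mid lpos by (intro ev_gt cb1) simp
        have "\<forall>\<^sub>F s in at s0. \<forall>x. a2 s \<le> x \<and> x \<le> b3 s \<longrightarrow> Pend U (Suc n) (P x ((4::real) ^ Suc m * s))"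
          using e0 e1 e2 img
        proof eventually_elim
          case (elim s)
          show ?case
          proof (intro allI impI)
            fix x assume x: "a2 s \<le> x \<and> x \<le> b3 s"
            then have "a1 s \<le> x" "3/4 \<le> x" "x \<le> Gs s" "x \<le> b1 s" using a2a1[of s] elim by (auto simp: b3_def)
            then show "Pend U (Suc n) (P x ((4::real) ^ Suc m * s))" using elim Fpow_Pend by auto
          qed
        qed
        moreover have "a2 s0 < b3 s0" using True lpos by (simp add: b3_def)
        moreover have "b3 s0 \<le> 1" using g1 lpos by (simp add: b3_def)
        moreover have "0 < a2 s0" using a2_34 by simp
        ultimately have S': "Strip (Suc n) (Suc m) a2 b3"
          by (intro StripI ca2 cb3)
        moreover have "7/5 * l \<le> b3 s0 - a2 s0" using True lpos by (simp add: b3_def)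
        ultimately show ?thesis using a2_34 by (auto simp: l_def)
      next
        case False
        define a3 where "a3 = (\<lambda>s::real. g + l/4)"
        have ca3: "isCont a3 s0" unfolding a3_def by (rule continuous_const)
        have e1: "\<forall>\<^sub>F s in at s0. Gs s < g + l/4" using g_Gs lpos by (intro ev_lt cGs) simp
        have "a1 s0 < g + l/4" using mid lpos by (simp add: a2_def)
        then have e2: "\<forall>\<^sub>F s in at s0. a1 s < g + l/4" by (intro ev_lt ca1)
        have "\<forall>\<^sub>F s in at s0. \<forall>x. a3 s \<le> x \<and> x \<le> b1 s \<longrightarrow> Pend U n (P x ((4::real) ^ Suc m * s))"
          using e1 e2 img
        proof eventually_elim
          case (elim s)
          show ?case
          proof (intro allI impI)
            fix x assume x: "a3 s \<le> x \<and> x \<le> b1 s"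
            then have "a1 s \<le> x" "Gs s < x" using elim by (auto simp: a3_def)
            then show "Pend U n (P x ((4::real) ^ Suc m * s))" using x elim by auto
          qed
        qed
        moreover have "a3 s0 < b1 s0" using False BA lpos by (simp add: a3_def a2_def)
        moreover have "0 < a3 s0" using g1 lpos by (simp add: a3_def)
        ultimately have S': "Strip n (Suc m) a3 b1"
          by (intro StripI ca3 cb1 B1)
        moreover have "7/5 * l \<le> b1 s0 - a3 s0" using False BA lpos by (simp add: a3_def a2_def)
        moreover have "3/4 < a3 s0" using g1 lpos by (simp add: a3_def)
        ultimately show ?thesis by (auto simp: l_def)
      qed
    qed
  qed
qed

end

lemma circ_isCont: "isCont circ s"
proof -
  have "continuous_on UNIV (\<lambda>s. cis (2 * pi * s))"
    by (intro continuous_on_cis continuous_on_mult continuous_on_const continuous_on_id)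
  then show ?thesis unfolding circ_def[abs_def] by (simp add: continuous_on_eq_continuous_at)
qed

context strip_setting begin

lemma strip_goal_aux:
  "Strip n m a b \<Longrightarrow> 3/4 < a s0 \<Longrightarrow> 1 < (b s0 - a s0) * (7/5) ^ N \<Longrightarrow> \<exists>n' m' \<delta>. Goal n' m' \<delta>"
proof (induction N arbitrary: n m a b)
  case 0
  then show ?case using StripD[OF 0(1)] by simp
next
  case (Suc N)
  have "RES (7/5) (b s0 - a s0)" by (rule RS[OF Suc.prems(1,2)])
  then show ?case
  proof (elim disjE exE conjE)
    fix n' m' \<delta> assume "Goal n' m' \<delta>" then show ?thesis by blast
  next
    fix n' m' a' b' assume S: "Strip n' m' a' b'" "3/4 < a' s0" "7/5 * (b s0 - a s0) \<le> b' s0 - a' s0"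
    have "1 < (b s0 - a s0) * (7/5) ^ Suc N" by (rule Suc.prems(3))
    also have "\<dots> = (7/5 * (b s0 - a s0)) * (7/5) ^ N" by simp
    also have "\<dots> \<le> (b' s0 - a' s0) * (7/5) ^ N" by (rule mult_right_mono[OF S(3)]) simp
    finally show ?thesis using Suc.IH[OF S(1,2)] by blast
  qed
qed

lemma strip_goal:
  assumes "Strip n m a b" "3/4 < a s0" shows "\<exists>n' m' \<delta>. Goal n' m' \<delta>"
proof -
  have lpos: "0 < b s0 - a s0" using StripD(4)[OF assms(1)] by simp
  obtain N where "1 / (b s0 - a s0) < (7/5::real) ^ N" using real_arch_pow[of "7/5"] by auto
  then have "1 < (b s0 - a s0) * (7/5) ^ N" using lpos by (simp add: field_simps)
  then show ?thesis by (rule strip_goal_aux[OF assms])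
qed

lemma init_strip:
  assumes op: "openin (top_of_set Y) U" and p: "P x0 s0 \<in> U"
  shows "\<exists>a b. Strip 0 0 a b \<and> 3/4 < a s0"
proof -
  obtain r where r: "0 < r" "ball (P x0 s0) r \<inter> Y \<subseteq> U"
    using op p unfolding openin_contains_ball by blast
  have "P x0 s0 \<in> Y" using p UY by blast
  then have x0: "3/4 \<le> x0" "x0 \<le> G s0" using Y_P by auto
  define lo where "lo = max (3/4) (x0 - r/2)"
  define hi where "hi = min (G s0) (x0 + r/2)"
  have lohi: "lo < hi" using x0 r G_gt[of s0] by (simp add: lo_def hi_def)
  define a where "a = lo + (hi - lo)/3"
  define b where "b = lo + 2 * (hi - lo)/3"
  have ab: "lo < a" "a < b" "b < hi" using lohi unfolding a_def b_def by argo+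
  have a34: "3/4 < a" using ab by (simp add: lo_def)
  have bG: "b < G s0" using ab by (simp add: hi_def)
  have e1: "\<forall>\<^sub>F s in at s0. b < G s" using bG by (rule ev_gt[OF G_isCont])
  have cd: "isCont (\<lambda>s. dist (circ s) (circ s0)) s0"
    by (intro continuous_dist circ_isCont continuous_const)
  have e2: "\<forall>\<^sub>F s in at s0. dist (circ s) (circ s0) < r/2"
    using r(1) by (intro ev_lt[OF cd]) simp
  have "\<forall>\<^sub>F s in at s0. \<forall>x. (\<lambda>_. a) s \<le> x \<and> x \<le> (\<lambda>_. b) s \<longrightarrow> Pend U 0 (P x ((4::real) ^ 0 * s))"
    using e1 e2
  proof eventually_elim
    case (elim s)
    show ?case
    proof (intro allI impI)
      fix x assume x: "(\<lambda>_. a) s \<le> x \<and> x \<le> (\<lambda>_. b) s"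
      have xY: "P x s \<in> Y" using x a34 elim Y_P by auto
      have "x0 - r/2 < a" "b < x0 + r/2" using ab by (auto simp: lo_def hi_def)
      then have "\<bar>x - x0\<bar> < r/2" using x by (simp add: abs_less_iff) argo
      have "dist (P x s) (P x0 s0) = norm (x - x0, circ s - circ s0)" by (simp add: dist_norm)
      also have "\<dots> \<le> norm (x - x0) + norm (circ s - circ s0)" by (rule norm_Pair_le)
      also have "\<dots> < r/2 + r/2" using \<open>\<bar>x - x0\<bar> < r/2\<close> elim by (simp add: dist_norm)
      finally have "P x s \<in> ball (P x0 s0) r" by (simp add: dist_commute)
      then have "P x s \<in> U" using xY r(2) by blast
      then show "Pend U 0 (P x ((4::real) ^ 0 * s))" using Fpow_Pend by simp
    qed
  qed
  then have "Strip 0 0 (\<lambda>_. a) (\<lambda>_. b)"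
    by (intro StripI continuous_const) (use a34 ab bG G_le1[of s0] in auto)
  then show ?thesis using a34 by blast
qed

lemma goal_V:
  assumes "Goal n m \<delta>"
  shows "\<exists>\<sigma> \<eta>. 0 < \<eta> \<and> (\<forall>s' x. \<sigma> \<le> s' \<and> s' \<le> \<sigma> + \<eta> \<and> 3/4 < x \<and> x \<le> 3/4 + \<delta>
           \<longrightarrow> P x s' \<in> Fpow_img \<gamma> u n U)"
proof -
  from assms obtain r where r: "0 < r"
    "\<And>s. s \<noteq> s0 \<Longrightarrow> dist s s0 < r \<Longrightarrow> \<forall>x. 3/4 < x \<and> x \<le> 3/4 + \<delta> \<longrightarrow> P x ((4::real) ^ m * s) \<in> Fpow_img \<gamma> u n U"
    unfolding Goal_def eventually_at by auto
  define c where "c = (4::real) ^ m"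
  have cpos: "0 < c" by (simp add: c_def)
  show ?thesis
  proof (intro exI conjI allI impI)
    show "0 < c * (r/4)" using cpos r by simp
    fix s' x assume H: "c * (s0 + r/4) \<le> s' \<and> s' \<le> c * (s0 + r/4) + c * (r/4) \<and> 3/4 < x \<and> x \<le> 3/4 + \<delta>"
    define s where "s = s' / c"
    have s'eq: "s' = c * s" using cpos by (simp add: s_def)
    have "s0 + r/4 \<le> s" "s \<le> s0 + r/2" using H cpos by (simp_all add: s_def field_simps)
    then have "s \<noteq> s0" "dist s s0 < r" using r(1) by (auto simp: dist_real_def)
    then have "P x ((4::real) ^ m * s) \<in> Fpow_img \<gamma> u n U" using r(2) H by blast
    then show "P x s' \<in> Fpow_img \<gamma> u n U" using s'eq by (simp add: c_def)
  qed
qed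

end

context setting begin

lemma back_step:
  assumes "0 < y" "y < 3/4" shows "\<exists>w. 0 < w \<and> w \<le> y \<and> L w t = y"
proof -
  have cont: "continuous_on {0..y} (\<lambda>x. L x t)"
    by (rule continuous_on_subset[OF L_cont]) (use assms in auto)
  have "y < L y t" by (rule L_gt) (use assms in auto)
  then obtain w where w: "0 \<le> w" "w \<le> y" "L w t = y"
    using IVT'[of "\<lambda>x. L x t" 0 y y, OF _ _ _ cont] assms by auto
  have "w \<noteq> 0" using w assms by auto
  then have "0 < w" using w(1) by simp
  then show ?thesis using w(2,3) by blast
qed

lemma Back:
  assumes kap: "\<And>x t. 4 * \<delta> < x \<Longrightarrow> x \<le> 3/4 \<Longrightarrow> \<kappa> \<le> L x t - x" and k0: "0 \<le> \<kappa>"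
  shows "0 < y \<Longrightarrow> y < 3/4 \<Longrightarrow> \<exists>z. 0 < z \<and> z \<le> max (4 * \<delta>) (y - real j * \<kappa>) \<and>
     (fm ^^ j) (P z t) = P y (4 ^ j * t) \<and> (\<forall>i\<le>j. (fm ^^ i) (P z t) \<notin> Y)"
proof (induction j arbitrary: y)
  case 0
  have "P y t \<notin> Y" using 0 Y_P by simp
  then show ?case using 0 by (intro exI[of _ y]) auto
next
  case (Suc j)
  obtain w where w: "0 < w" "w \<le> y" "L w (4 ^ j * t) = y" using back_step[OF Suc.prems] by blast
  have w34: "w < 3/4" using w Suc.prems by simp
  obtain z where z: "0 < z" "z \<le> max (4 * \<delta>) (w - real j * \<kappa>)" "(fm ^^ j) (P z t) = P w (4 ^ j * t)"
    "\<forall>i\<le>j. (fm ^^ i) (P z t) \<notin> Y"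
    using Suc.IH[OF w(1) w34] by blast
  have "(fm ^^ Suc j) (P z t) = fm (P w (4 ^ j * t))" using z(3) by simp
  also have "\<dots> = P (F1 w (4 ^ j * t)) (4 * (4 ^ j * t))" by (rule fm_P) (use w in simp)
  also have "F1 w (4 ^ j * t) = y" using w w34 by (simp add: F1_def)
  finally have fz: "(fm ^^ Suc j) (P z t) = P y (4 ^ Suc j * t)" by (simp only: mult.assoc power_Suc)
  have bound: "z \<le> max (4 * \<delta>) (y - real (Suc j) * \<kappa>)"
  proof (cases "w \<le> 4 * \<delta>")
    case True
    then have "w - real j * \<kappa> \<le> 4 * \<delta>" using k0 by (smt (verit) mult_nonneg_nonneg of_nat_0_le_iff)
    then show ?thesis using z(2) by simp
  next
    case False
    then have "\<kappa> \<le> L w (4 ^ j * t) - w" using w34 by (intro kap) auto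
    then have "w - real j * \<kappa> \<le> y - real (Suc j) * \<kappa>" using w(3) by (simp add: algebra_simps)
    then show ?thesis using z(2) by (simp add: max_def) argo
  qed
  have "(fm ^^ i) (P z t) \<notin> Y" if "i \<le> Suc j" for i
  proof (cases "i = Suc j")
    case True then show ?thesis using fz Y_P Suc.prems by simp
  next
    case False then show ?thesis using z(4) that by simp
  qed
  then show ?case using z(1) bound fz by blast
qed

lemma ret1:
  assumes "q \<in> S" "q \<in> Y" "fm q \<in> Y"
  shows "fm q \<in> Fret \<gamma> u ` (S \<inter> return_dom \<gamma> u)"
  using ret_lemma[of q S 1] assms by simp

lemma V_lemma:
  assumes WY: "W \<subseteq> Y" and eta: "0 < \<eta>" and dl: "0 < \<delta>" "\<delta> \<le> 3/16"
    and V: "\<And>s' x. \<sigma> \<le> s' \<Longrightarrow> s' \<le> \<sigma> + \<eta> \<Longrightarrow> 3/4 < x \<Longrightarrow> x \<le> 3/4 + \<delta> \<Longrightarrow> P x s' \<in> W"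
    and tg: "3/4 < x'" "x' < G s'"
  shows "P x' s' \<in> Fret \<gamma> u ` (W \<inter> return_dom \<gamma> u)"
proof -
  obtain i where i: "i \<le> 3" "G s' = h ((real i + s')/4)" using G_cases by blast
  define \<psi> where "\<psi> = (real i + s')/4"
  have xh: "x' < h \<psi>" using tg i by (simp add: \<psi>_def)
  obtain m0 where m0: "m0 > 0" "\<And>x t. 0 \<le> x \<and> x \<le> 3/4 \<Longrightarrow> m0 \<le> u (x, t)"
    using u_lower by blast
  define c0 where "c0 = 4 * \<delta>"
  have c0pos: "0 < c0" using dl by (simp add: c0_def)
  define \<kappa> where "\<kappa> = c0 * (c0 powr \<gamma> * m0)"
  have kpos: "0 < \<kappa>" using c0pos m0 by (simp add: \<kappa>_def)
  have kap: "\<kappa> \<le> L x t - x" if x: "4 * \<delta> < x" "x \<le> 3/4" for x t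
  proof -
    have eq: "L x t - x = x * (x powr \<gamma> * u (x, t))" by (simp add: L_def algebra_simps)
    have cx: "c0 \<le> x" using x by (simp add: c0_def)
    have "c0 powr \<gamma> \<le> x powr \<gamma>" by (rule powr_mono2) (use gpos c0pos cx in auto)
    moreover have "m0 \<le> u (x, t)" by (rule m0(2)) (use c0pos cx x in auto)
    ultimately have cm: "c0 powr \<gamma> * m0 \<le> x powr \<gamma> * u (x, t)"
      by (rule mult_mono) (use m0 in auto)
    have "c0 * (c0 powr \<gamma> * m0) \<le> x * (x powr \<gamma> * u (x, t))"
      by (rule mult_mono[OF _ cm]) (use cx c0pos m0 in auto)
    then show ?thesis using eq by (simp add: \<kappa>_def)
  qed
  obtain M1 :: nat where M1: "(3/4) / \<kappa> < real M1" using reals_Archimedean2 by blast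
  obtain M2 :: nat where M2: "1 / \<eta> < (4::real) ^ M2" using real_arch_pow[of 4] by auto
  define M where "M = max M1 M2"
  have MK: "3/4 < real M * \<kappa>"
  proof -
    have "3/4 < real M1 * \<kappa>" using M1 kpos by (simp add: pos_divide_less_eq)
    also have "\<dots> \<le> real M * \<kappa>" using kpos by (intro mult_right_mono) (auto simp: M_def)
    finally show ?thesis .
  qed
  define c where "c = (4::real) ^ Suc M"
  have cpos: "0 < c" by (simp add: c_def)
  have "(4::real) ^ M2 \<le> c" unfolding c_def by (rule power_increasing) (auto simp: M_def)
  then have "1 / \<eta> < c" using M2 by linarith
  then have ceta: "1 / c < \<eta>" using eta cpos by (simp add: field_simps)
  define k where "k = \<lceil>c * \<sigma> - \<psi>\<rceil>"
  define s where "s = (\<psi> + of_int k) / c"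
  have cs: "c * s = \<psi> + of_int k" using cpos by (simp add: s_def)
  have k1: "c * \<sigma> - \<psi> \<le> of_int k" "of_int k < c * \<sigma> - \<psi> + 1" unfolding k_def by linarith+
  have s1: "\<sigma> \<le> s" using k1(1) cpos by (simp add: s_def field_simps)
  have "\<psi> + of_int k < c * \<sigma> + 1" using k1(2) by linarith
  then have "s < (c * \<sigma> + 1) / c" unfolding s_def using cpos by (rule divide_strict_right_mono)
  also have "(c * \<sigma> + 1) / c = \<sigma> + 1 / c" using cpos by (simp add: field_simps)
  finally have "s < \<sigma> + 1 / c" .
  then have s2: "s \<le> \<sigma> + \<eta>" using ceta by simp
  have hk: "L (3/4) (\<psi> + of_int k) = h \<psi>" using h_int[of \<psi> k] by (simp add: h_def)
  have contL: "continuous_on {0..3/4} (\<lambda>x. L x (\<psi> + of_int k))" by (rule L_cont)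
  obtain zN where zN: "0 \<le> zN" "zN \<le> 3/4" "L zN (\<psi> + of_int k) = x'"
    using IVT'[of "\<lambda>x. L x (\<psi> + of_int k)" 0 x' "3/4", OF _ _ _ contL] tg xh hk by auto
  have zN0: "0 < zN" using zN tg by (cases "zN = 0") auto
  have zN34: "zN < 3/4" using zN xh hk by (cases "zN = 3/4") auto
  obtain z where z: "0 < z" "z \<le> max (4 * \<delta>) (zN - real M * \<kappa>)"
    "(fm ^^ M) (P z (4 * s)) = P zN (4 ^ M * (4 * s))" "\<forall>i\<le>M. (fm ^^ i) (P z (4 * s)) \<notin> Y"
    using Back[where \<delta>=\<delta> and \<kappa>=\<kappa> and j=M and t="4 * s", OF kap less_imp_le[OF kpos] zN0 zN34] by blast
  have "zN - real M * \<kappa> < 4 * \<delta>" using zN34 MK dl by argo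
  then have "max (4 * \<delta>) (zN - real M * \<kappa>) = 4 * \<delta>" by simp
  then have z4: "z \<le> 4 * \<delta>" using z(2) by simp
  define x where "x = (z + 3) / 4"
  have x1: "3/4 < x" "x \<le> 3/4 + \<delta>" using z(1) z4 by (simp_all add: x_def)
  have q0W: "P x s \<in> W" by (rule V[OF s1 s2 x1])
  have q0Y: "P x s \<in> Y" using q0W WY by blast
  have fq0: "fm (P x s) = P z (4 * s)"
  proof -
    have "fm (P x s) = P (F1 x s) (4 * s)" by (rule fm_P) (use x1 in simp)
    also have "F1 x s = 4 * x - 3" using x1 by (simp add: F1_def)
    also have "4 * x - 3 = z" by (simp add: x_def field_simps)
    finally show ?thesis .
  qed
  have ang: "4 ^ M * (4 * s) = \<psi> + of_int k" using cs by (simp add: c_def mult.assoc)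
  have last: "fm (P zN (\<psi> + of_int k)) = P x' s'"
  proof -
    have "fm (P zN (\<psi> + of_int k)) = P (F1 zN (\<psi> + of_int k)) (4 * (\<psi> + of_int k))"
      by (rule fm_P) (use zN in simp)
    also have "F1 zN (\<psi> + of_int k) = x'" using zN by (simp add: F1_def)
    also have "4 * (\<psi> + of_int k) = s' + of_int (int i + 4 * k)" by (simp add: \<psi>_def algebra_simps)
    finally show ?thesis by (simp only: circ_add_int)
  qed
  have iter: "(fm ^^ j) (P x s) = (fm ^^ (j - 1)) (P z (4 * s))" if j1: "1 \<le> j" for j
  proof -
    obtain j' where jj: "j = Suc j'" using j1 by (cases j) simp_all
    have "(fm ^^ Suc j') (P x s) = (fm ^^ j') (fm (P x s))" by (simp only: funpow_Suc_right comp_def)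
    then show ?thesis using fq0 jj by simp
  qed
  have full: "(fm ^^ Suc (Suc M)) (P x s) = P x' s'"
    using iter[of "Suc (Suc M)"] z(3) ang last by simp
  have "(fm ^^ Suc (Suc M)) (P x s) \<in> Fret \<gamma> u ` (W \<inter> return_dom \<gamma> u)"
  proof (rule ret_lemma[OF q0W q0Y])
    show "1 \<le> Suc (Suc M)" by simp
    show "(fm ^^ Suc (Suc M)) (P x s) \<in> Y" using full tg Y_P by simp
    fix j assume j: "1 \<le> j" "j < Suc (Suc M)"
    then show "(fm ^^ j) (P x s) \<notin> Y" using iter[OF j(1)] z(4) by simp
  qed
  then show ?thesis using full by simp
qed

end

context setting begin

lemma step_Yo:
  assumes WY: "W \<subseteq> Y" and Wo: "\<And>x' s'. 3/4 < x' \<Longrightarrow> x' < G s' \<Longrightarrow> P x' s' \<in> W"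
  shows "\<And>x' s'. 3/4 < x' \<Longrightarrow> x' < G s' \<Longrightarrow> P x' s' \<in> Fret \<gamma> u ` (W \<inter> return_dom \<gamma> u)"
    and "\<And>s'. P (3/4) s' \<in> Fret \<gamma> u ` (W \<inter> return_dom \<gamma> u)"
proof -
  fix x' s' assume tg: "3/4 < x'" "x' < G s'"
  show "P x' s' \<in> Fret \<gamma> u ` (W \<inter> return_dom \<gamma> u)"
  proof (rule V_lemma[OF WY, of 1 "1/8" 0 x' s'])
    fix s'' x :: real assume "0 \<le> s''" "s'' \<le> 0 + 1" "3/4 < x" "x \<le> 3/4 + 1/8"
    then show "P x s'' \<in> W" using G_gt[of s''] by (intro Wo) auto
  qed (use tg in auto)
next
  fix s'
  have qW: "P (15/16) (s'/4) \<in> W" using G_gt[of "s'/4"] by (intro Wo) auto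
  have "fm (P (15/16) (s'/4)) = P (F1 (15/16) (s'/4)) (4 * (s'/4))" by (rule fm_P) simp
  also have "\<dots> = P (3/4) s'" by (simp add: F1_def)
  finally have fq: "fm (P (15/16) (s'/4)) = P (3/4) s'" .
  have "fm (P (15/16) (s'/4)) \<in> Fret \<gamma> u ` (W \<inter> return_dom \<gamma> u)"
    by (rule ret1[OF qW]) (use qW WY fq Y_P G_gt[of s'] in auto)
  then show "P (3/4) s' \<in> Fret \<gamma> u ` (W \<inter> return_dom \<gamma> u)" using fq by simp
qed

lemma step_top:
  assumes WY: "W \<subseteq> Y" and Wl: "\<And>s'. P (3/4) s' \<in> W"
  shows "P (G s') s' \<in> Fret \<gamma> u ` (W \<inter> return_dom \<gamma> u)"
proof -
  obtain i where i: "i \<le> 3" "G s' = h ((real i + s')/4)" using G_cases by blast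
  define \<psi> where "\<psi> = (real i + s')/4"
  have qW: "P (3/4) \<psi> \<in> W" by (rule Wl)
  have "fm (P (3/4) \<psi>) = P (F1 (3/4) \<psi>) (4 * \<psi>)" by (rule fm_P) simp
  also have "F1 (3/4) \<psi> = G s'" using i by (simp add: F1_def h_def \<psi>_def)
  also have "4 * \<psi> = s' + of_int (int i)" by (simp add: \<psi>_def)
  finally have fq: "fm (P (3/4) \<psi>) = P (G s') s'" by (simp only: circ_add_int)
  have "fm (P (3/4) \<psi>) \<in> Fret \<gamma> u ` (W \<inter> return_dom \<gamma> u)"
    by (rule ret1[OF qW]) (use qW WY fq Y_P G_gt[of s'] in auto)
  then show ?thesis using fq by simp
qed

lemma exact_main:
  assumes op: "openin (top_of_set Y) U" and ne: "U \<noteq> {}"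
  shows "\<exists>n. Y \<subseteq> Fpow_img \<gamma> u n U"
proof -
  have UY: "U \<subseteq> Y" using op by (rule openin_imp_subset)
  obtain p where pU: "p \<in> U" using ne by blast
  obtain x0 z0 where p: "p = (x0, z0)" by (cases p)
  have "z0 \<in> Tcirc" using pU UY p by (auto simp: Yset_def)
  then have "norm z0 = 1" by (simp add: Tcirc_def)
  then have cz: "circ (angle01 z0) = z0" by (rule circ_angle01)
  define s0 where "s0 = angle01 z0"
  have pP: "P x0 s0 \<in> U" using pU p cz by (simp add: s0_def)
  interpret S: strip_setting \<gamma> u u' U s0 by unfold_locales (rule UY)
  obtain a b where "S.Strip 0 0 a b" "3/4 < a s0" using S.init_strip[OF op pP] by blast
  then obtain n m \<delta> where G: "S.Goal n m \<delta>" using S.strip_goal by blast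
  then have dpos: "0 < \<delta>" by (simp add: S.Goal_def)
  obtain \<sigma> \<eta> where V: "0 < \<eta>" "\<And>s' x. \<sigma> \<le> s' \<and> s' \<le> \<sigma> + \<eta> \<and> 3/4 < x \<and> x \<le> 3/4 + \<delta>
           \<Longrightarrow> P x s' \<in> Fpow_img \<gamma> u n U"
    using S.goal_V[OF G] by blast
  have FY: "\<And>k. Fpow_img \<gamma> u k U \<subseteq> Y" by (rule Fpow_Y[OF UY])
  have Y1: "P x' s' \<in> Fpow_img \<gamma> u (Suc n) U" if "3/4 < x'" "x' < G s'" for x' s'
  proof -
    have "P x' s' \<in> Fret \<gamma> u ` (Fpow_img \<gamma> u n U \<inter> return_dom \<gamma> u)"
    proof (rule V_lemma[OF FY V(1), of "min \<delta> (3/16)" \<sigma>])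
      show "0 < min \<delta> (3/16)" using dpos by simp
      show "min \<delta> (3/16) \<le> 3/16" by simp
      fix s'' x assume "\<sigma> \<le> s''" "s'' \<le> \<sigma> + \<eta>" "3/4 < x" "x \<le> 3/4 + min \<delta> (3/16)"
      then show "P x s'' \<in> Fpow_img \<gamma> u n U" by (intro V(2)) auto
    qed (use that in auto)
    then show ?thesis by simp
  qed
  have Y2: "P x' s' \<in> Fpow_img \<gamma> u (Suc (Suc n)) U" if "3/4 < x'" "x' < G s'" for x' s'
    using step_Yo(1)[OF FY Y1 that] by simp
  have L2: "P (3/4) s' \<in> Fpow_img \<gamma> u (Suc (Suc n)) U" for s'
    using step_Yo(2)[OF FY Y1] by simp
  have Y3: "P x' s' \<in> Fpow_img \<gamma> u (Suc (Suc (Suc n))) U" if "3/4 < x'" "x' < G s'" for x' s'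
    using step_Yo(1)[OF FY Y2 that] by simp
  have L3: "P (3/4) s' \<in> Fpow_img \<gamma> u (Suc (Suc (Suc n))) U" for s'
    using step_Yo(2)[OF FY Y2] by simp
  have T3: "P (G s') s' \<in> Fpow_img \<gamma> u (Suc (Suc (Suc n))) U" for s'
    using step_top[OF FY L2] by simp
  have "Y \<subseteq> Fpow_img \<gamma> u (Suc (Suc (Suc n))) U"
  proof
    fix y assume yY: "y \<in> Y"
    obtain x z where y: "y = (x, z)" by (cases y)
    have "z \<in> Tcirc" using yY y by (auto simp: Yset_def)
    then have "norm z = 1" by (simp add: Tcirc_def)
    then have cz: "circ (angle01 z) = z" by (rule circ_angle01)
    define s where "s = angle01 z"
    have yP: "y = P x s" using y cz by (simp add: s_def)
    then have xr: "3/4 \<le> x" "x \<le> G s" using yY Y_P by auto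
    consider "x = 3/4" | "x = G s" | "3/4 < x" "x < G s" using xr by linarith
    then show "y \<in> Fpow_img \<gamma> u (Suc (Suc (Suc n))) U"
    proof cases
      case 1 show ?thesis using L3[of s] unfolding yP 1 .
    next
      case 2 show ?thesis using T3[of s] unfolding yP 2 .
    next
      case 3 then show ?thesis using yP Y3 by simp
    qed
  qed
  then show ?thesis by blast
qed

end

theorem proposition2p3:
  fixes \<gamma> :: real
  assumes "\<gamma> > 0"
  shows "\<exists>\<epsilon>>0. \<forall>(u :: real \<times> real \<Rightarrow> real) (c0 :: real).
     C2_on Sdom u \<and>
     (\<forall>p\<in>Sdom. u p > 0) \<and>
     (\<forall>x t. 0 \<le> x \<and> x \<le> 3/4 \<longrightarrow> u (x, t + 1) = u (x, t)) \<and>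
     c0 > 0 \<and> (\<forall>t. u (0, t) = c0) \<and>
     (\<forall>x t. 0 \<le> x \<and> x \<le> 3/4 \<longrightarrow> x * (1 + x powr \<gamma> * u (x, t)) \<le> 1) \<and>
     (\<forall>p\<in>Sdom. \<forall>D. (fleft_lift \<gamma> u has_derivative D) (at p within Sdom) \<longrightarrow>
        (\<forall>v. norm (D v) \<ge> norm v)) \<and>
     (\<forall>t. f1 \<gamma> u (3/4) t > 15/16) \<and>
     (\<forall>p\<in>Sdom. \<forall>D. (u has_derivative D) (at p within Sdom) \<longrightarrow>
        \<bar>fst p * D (1, 0)\<bar> \<le> \<epsilon> \<and> \<bar>D (0, 1)\<bar> \<le> \<epsilon>)
     \<longrightarrow> topologically_exact_F \<gamma> u"
proof (intro exI[of _ "1::real"] conjI allI impI)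
  show "(0::real) < 1" by simp
  fix u :: "real \<times> real \<Rightarrow> real" and c0 :: real
  assume H: "C2_on Sdom u \<and>
     (\<forall>p\<in>Sdom. u p > 0) \<and>
     (\<forall>x t. 0 \<le> x \<and> x \<le> 3/4 \<longrightarrow> u (x, t + 1) = u (x, t)) \<and>
     c0 > 0 \<and> (\<forall>t. u (0, t) = c0) \<and>
     (\<forall>x t. 0 \<le> x \<and> x \<le> 3/4 \<longrightarrow> x * (1 + x powr \<gamma> * u (x, t)) \<le> 1) \<and>
     (\<forall>p\<in>Sdom. \<forall>D. (fleft_lift \<gamma> u has_derivative D) (at p within Sdom) \<longrightarrow>
        (\<forall>v. norm (D v) \<ge> norm v)) \<and>
     (\<forall>t. f1 \<gamma> u (3/4) t > 15/16) \<and>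
     (\<forall>p\<in>Sdom. \<forall>D. (u has_derivative D) (at p within Sdom) \<longrightarrow>
        \<bar>fst p * D (1, 0)\<bar> \<le> 1 \<and> \<bar>D (0, 1)\<bar> \<le> 1)"
  from H obtain u' :: "real \<times> real \<Rightarrow> (real \<times> real) \<Rightarrow>\<^sub>L real"
    where u': "\<forall>p\<in>Sdom. (u has_derivative blinfun_apply (u' p)) (at p within Sdom)"
    unfolding C2_on_def by blast
  interpret setting \<gamma> u u'
  proof
    show "0 < \<gamma>" by (rule assms)
    show "\<And>p. p \<in> Sdom \<Longrightarrow> (u has_derivative blinfun_apply (u' p)) (at p within Sdom)" using u' by blast
    show "\<And>p. p \<in> Sdom \<Longrightarrow> 0 < u p" using H by blast
    show "\<And>x t. 0 \<le> x \<Longrightarrow> x \<le> 3/4 \<Longrightarrow> u (x, t + 1) = u (x, t)" using H by blast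
    show "\<And>x t. 0 \<le> x \<Longrightarrow> x \<le> 3/4 \<Longrightarrow> x * (1 + x powr \<gamma> * u (x, t)) \<le> 1" using H by blast
    show "\<And>p D v. p \<in> Sdom \<Longrightarrow> (fleft_lift \<gamma> u has_derivative D) (at p within Sdom) \<Longrightarrow> norm v \<le> norm (D v)"
      using H by blast
    show "\<And>t. 15/16 < f1 \<gamma> u (3/4) t" using H by blast
  qed
  show "topologically_exact_F \<gamma> u"
    unfolding topologically_exact_F_def using exact_main by blast
qed

end
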